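(* Let $(\mu_n)$ be a norm bounded sequence in $ba(\mathcal A)_+$, let $\Gamma(n)=\mathrm{co}(\mu_n,\mu_{n+1},\ldots)$ and $\lambda=\sum_n2^{-n}\mu_n$. There exist $\xi\in ba(\mathcal A,\lambda)_+$ and a sequence $(m_n)$ with $m_n\in\Gamma(n)$ for each $n$ such that, for every $k\in\mathbb N$, $\lim_n\|(\xi\wedge k\lambda)-(m_n\wedge k\lambda)\|=0$, and $\xi(A)\le\liminf_nm_n(A)$ for every $A\in\mathcal A$.
   Context: $\mathcal A$ algebra of subsets of $\Omega$; $ba(\mathcal A)$ the Banach lattice of bounded finitely additive real set functions with $\|\mu\|=|\mu|(\Omega)$, $ba(\mathcal A)_+$ its nonnegative elements and $\wedge$ the lattice infimum in $ba(\mathcal A)$. $\mathrm{co}$ denotes (finite) convex hull. $ba(\mathcal A,\lambda)_+$ is the set of nonnegative $\mu$ with $\mu\ll\lambda$, where $\mu\ll\lambda$ means for every $\varepsilon>0$ there is $\delta>0$ with $|\lambda|(A)<\delta\Rightarrow|\mu|(A)<\varepsilon$. *)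

theory Defs
  imports "HOL-Analysis.Analysis"
begin

text \<open>Set functions on an algebra A of subsets of Omega are modelled as
  functions of type 'a set => real; only their values on A matter.\<close>

definition fin_additive :: "'a set set \<Rightarrow> ('a set \<Rightarrow> real) \<Rightarrow> bool" where
  "fin_additive A \<mu> \<longleftrightarrow>
     (\<forall>B\<in>A. \<forall>C\<in>A. B \<inter> C = {} \<longrightarrow> \<mu> (B \<union> C) = \<mu> B + \<mu> C)"

definition tvar :: "'a set set \<Rightarrow> ('a set \<Rightarrow> real) \<Rightarrow> 'a set \<Rightarrow> real" where
  "tvar A \<mu> B = Sup {(\<Sum>C\<in>P. \<bar>\<mu> C\<bar>) | P. finite P \<and> P \<subseteq> A \<and> disjoint P \<and> \<Union>P = B}"

definition ba :: "'a set \<Rightarrow> 'a set set \<Rightarrow> ('a set \<Rightarrow> real) set" where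
  "ba \<Omega> A = {\<mu>. fin_additive A \<mu> \<and>
      bdd_above {(\<Sum>C\<in>P. \<bar>\<mu> C\<bar>) | P. finite P \<and> P \<subseteq> A \<and> disjoint P \<and> \<Union>P = \<Omega>}}"

definition ba_norm :: "'a set \<Rightarrow> 'a set set \<Rightarrow> ('a set \<Rightarrow> real) \<Rightarrow> real" where
  "ba_norm \<Omega> A \<mu> = tvar A \<mu> \<Omega>"

definition ba_pos :: "'a set \<Rightarrow> 'a set set \<Rightarrow> ('a set \<Rightarrow> real) set" where
  "ba_pos \<Omega> A = {\<mu> \<in> ba \<Omega> A. \<forall>B\<in>A. 0 \<le> \<mu> B}"

definition ba_inf :: "'a set set \<Rightarrow> ('a set \<Rightarrow> real) \<Rightarrow> ('a set \<Rightarrow> real) \<Rightarrow> 'a set \<Rightarrow> real" where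
  "ba_inf A \<mu> \<nu> B = Inf {\<mu> C + \<nu> (B - C) | C. C \<in> A \<and> C \<subseteq> B}"

definition abs_cont :: "'a set set \<Rightarrow> ('a set \<Rightarrow> real) \<Rightarrow> ('a set \<Rightarrow> real) \<Rightarrow> bool" where
  "abs_cont A \<mu> lam \<longleftrightarrow>
     (\<forall>\<epsilon>>0. \<exists>\<delta>>0. \<forall>B\<in>A. tvar A lam B < \<delta> \<longrightarrow> tvar A \<mu> B < \<epsilon>)"

definition ba_ac_pos :: "'a set \<Rightarrow> 'a set set \<Rightarrow> ('a set \<Rightarrow> real) \<Rightarrow> ('a set \<Rightarrow> real) set" where
  "ba_ac_pos \<Omega> A lam = {\<mu> \<in> ba_pos \<Omega> A. abs_cont A \<mu> lam}"

definition tail_co :: "(nat \<Rightarrow> 'a set \<Rightarrow> real) \<Rightarrow> nat \<Rightarrow> ('a set \<Rightarrow> real) set" where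
  "tail_co \<mu> n = {(\<lambda>B. \<Sum>i\<in>F. c i * \<mu> i B) | F c. finite F \<and> F \<noteq> {} \<and> F \<subseteq> {n..}
       \<and> (\<forall>i\<in>F. 0 \<le> c i) \<and> sum c F = 1}"

end

theory Submission
  imports Defs
begin

definition partn :: "'a set \<Rightarrow> 'a set set \<Rightarrow> 'a set set \<Rightarrow> bool" where
  "partn \<Omega> A P \<longleftrightarrow> finite P \<and> P \<subseteq> A \<and> disjoint P \<and> \<Union>P = \<Omega>"

definition prefines :: "'a set set \<Rightarrow> 'a set set \<Rightarrow> bool" where
  "prefines R P \<longleftrightarrow> (\<forall>E\<in>R. \<exists>C\<in>P. E \<subseteq> C)"

definition superadd :: "'a set set \<Rightarrow> ('a set \<Rightarrow> real) \<Rightarrow> bool" where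
  "superadd A F \<longleftrightarrow> (\<forall>X\<in>A. \<forall>Y\<in>A. X \<inter> Y = {} \<longrightarrow> F X + F Y \<le> F (X \<union> Y))"

lemma superadd_family:
  assumes alg: "algebra \<Omega> A" and F0: "0 \<le> F {}" and sa: "superadd A F"
    and fin: "finite I" and fA: "\<And>i. i \<in> I \<Longrightarrow> f i \<in> A"
    and dj: "\<And>i j. i \<in> I \<Longrightarrow> j \<in> I \<Longrightarrow> i \<noteq> j \<Longrightarrow> f i \<inter> f j = {}"
  shows "(\<Sum>i\<in>I. F (f i)) \<le> F (\<Union>i\<in>I. f i)"
  using fin fA dj
proof (induction I rule: finite_induct)
  case empty
  then show ?case using F0 by simp
next
  case (insert x I)
  interpret algebra \<Omega> A by (rule alg)
  have U: "(\<Union>i\<in>I. f i) \<in> A" using insert by auto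
  have D: "f x \<inter> (\<Union>i\<in>I. f i) = {}" using insert.prems(2)[of x] insert.hyps by auto
  have "(\<Sum>i\<in>insert x I. F (f i)) = F (f x) + (\<Sum>i\<in>I. F (f i))"
    using insert.hyps by simp
  also have "\<dots> \<le> F (f x) + F (\<Union>i\<in>I. f i)" using insert by auto
  also have "\<dots> \<le> F (f x \<union> (\<Union>i\<in>I. f i))"
    using sa U D insert.prems(1)[of x] unfolding superadd_def by auto
  finally show ?case by simp
qed

lemma fa_empty: assumes "fin_additive A \<nu>" "{} \<in> A" shows "\<nu> {} = 0"
  using assms unfolding fin_additive_def by (metis Un_empty inf_bot_left add_cancel_right_right)

lemma fa_superadd: "fin_additive A \<nu> \<Longrightarrow> superadd A \<nu>"
  unfolding fin_additive_def superadd_def by auto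

lemma fa_superadd_neg: "fin_additive A \<nu> \<Longrightarrow> superadd A (\<lambda>X. - \<nu> X)"
  unfolding fin_additive_def superadd_def by auto

lemma add_family:
  assumes alg: "algebra \<Omega> A" and fa: "fin_additive A \<nu>"
    and fin: "finite I" and fA: "\<And>i. i \<in> I \<Longrightarrow> f i \<in> A"
    and dj: "\<And>i j. i \<in> I \<Longrightarrow> j \<in> I \<Longrightarrow> i \<noteq> j \<Longrightarrow> f i \<inter> f j = {}"
  shows "(\<Sum>i\<in>I. \<nu> (f i)) = \<nu> (\<Union>i\<in>I. f i)"
proof -
  interpret algebra \<Omega> A by (rule alg)
  have e: "\<nu> {} = 0" using fa_empty[OF fa empty_sets] .
  have 1: "(\<Sum>i\<in>I. \<nu> (f i)) \<le> \<nu> (\<Union>i\<in>I. f i)"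
    by (rule superadd_family[OF alg _ fa_superadd[OF fa] fin fA dj]) (auto simp: e)
  have 2: "(\<Sum>i\<in>I. (\<lambda>X. - \<nu> X) (f i)) \<le> (\<lambda>X. - \<nu> X) (\<Union>i\<in>I. f i)"
    by (rule superadd_family[OF alg _ fa_superadd_neg[OF fa] fin fA dj]) (auto simp: e)
  show ?thesis using 1 2 by (simp add: sum_negf)
qed

lemma partn_sum:
  assumes alg: "algebra \<Omega> A" and fa: "fin_additive A \<nu>" and P: "partn \<Omega> A P"
  shows "(\<Sum>C\<in>P. \<nu> C) = \<nu> \<Omega>"
  using add_family[OF alg fa, of P "\<lambda>X. X"] P unfolding partn_def disjoint_def by auto

lemma refine_sum:
  assumes alg: "algebra \<Omega> A" and F0: "F {} = 0" and sa: "superadd A F"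
    and P: "partn \<Omega> A P" and R: "partn \<Omega> A R" and ref: "prefines R P"
  shows "(\<Sum>E\<in>R. F E) \<le> (\<Sum>C\<in>P. F C)"
proof -
  interpret algebra \<Omega> A by (rule alg)
  have fP: "finite P" "P \<subseteq> A" "disjoint P" "\<Union>P = \<Omega>" using P unfolding partn_def by auto
  have fR: "finite R" "R \<subseteq> A" "disjoint R" "\<Union>R = \<Omega>" using R unfolding partn_def by auto
  have inner: "(\<Sum>C\<in>P. F (E \<inter> C)) = F E" if E: "E \<in> R" for E
  proof -
    obtain C0 where C0: "C0 \<in> P" "E \<subseteq> C0" using ref E unfolding prefines_def by auto
    have "(\<Sum>C\<in>P. F (E \<inter> C)) = F (E \<inter> C0) + (\<Sum>C\<in>P - {C0}. F (E \<inter> C))"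
      using sum.remove[OF fP(1) C0(1)] by simp
    also have "(\<Sum>C\<in>P - {C0}. F (E \<inter> C)) = 0"
    proof (rule sum.neutral, rule ballI)
      fix C assume CC: "C \<in> P - {C0}"
      then have "C \<inter> C0 = {}" using fP(3) C0(1) unfolding disjoint_def by blast
      then have "E \<inter> C = {}" using C0(2) by blast
      then show "F (E \<inter> C) = 0" using F0 by simp
    qed
    finally show ?thesis using C0(2) by (simp add: Int_absorb2)
  qed
  have "(\<Sum>E\<in>R. F E) = (\<Sum>E\<in>R. \<Sum>C\<in>P. F (E \<inter> C))"
    by (rule sum.cong[OF refl]) (rule inner[symmetric])
  also have "\<dots> = (\<Sum>C\<in>P. \<Sum>E\<in>R. F (E \<inter> C))" by (rule sum.swap)
  also have "\<dots> \<le> (\<Sum>C\<in>P. F (\<Union>E\<in>R. E \<inter> C))"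
  proof (rule sum_mono)
    fix C assume C: "C \<in> P"
    show "(\<Sum>E\<in>R. F (E \<inter> C)) \<le> F (\<Union>E\<in>R. E \<inter> C)"
    proof (rule superadd_family[OF alg _ sa fR(1)])
      show "0 \<le> F {}" using F0 by simp
      fix E assume "E \<in> R" then show "E \<inter> C \<in> A" using fR(2) fP(2) C by auto
    next
      fix E E' assume "E \<in> R" "E' \<in> R" "E \<noteq> E'"
      then show "E \<inter> C \<inter> (E' \<inter> C) = {}" using fR(3) unfolding disjoint_def by auto
    qed
  qed
  also have "\<dots> = (\<Sum>C\<in>P. F C)"
  proof (rule sum.cong[OF refl])
    fix C assume "C \<in> P"
    then have "C \<subseteq> \<Omega>" using fP by auto
    moreover have "(\<Union>E\<in>R. E \<inter> C) = (\<Union>R) \<inter> C" by blast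
    ultimately have "(\<Union>E\<in>R. E \<inter> C) = C" using fR(4) by blast
    then show "F (\<Union>E\<in>R. E \<inter> C) = F C" by simp
  qed
  finally show ?thesis .
qed

definition pinter :: "'a set set \<Rightarrow> 'a set set \<Rightarrow> 'a set set" where
  "pinter P Q = (\<lambda>(C,D). C \<inter> D) ` (P \<times> Q)"

lemma pinter_partn:
  assumes alg: "algebra \<Omega> A" and P: "partn \<Omega> A P" and Q: "partn \<Omega> A Q"
  shows "partn \<Omega> A (pinter P Q)" "prefines (pinter P Q) P" "prefines (pinter P Q) Q"
proof -
  interpret algebra \<Omega> A by (rule alg)
  have fP: "finite P" "P \<subseteq> A" "disjoint P" "\<Union>P = \<Omega>" using P unfolding partn_def by auto
  have fQ: "finite Q" "Q \<subseteq> A" "disjoint Q" "\<Union>Q = \<Omega>" using Q unfolding partn_def by auto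
  show "partn \<Omega> A (pinter P Q)" unfolding partn_def pinter_def
  proof (intro conjI)
    show "finite ((\<lambda>(C, D). C \<inter> D) ` (P \<times> Q))" using fP fQ by auto
    show "(\<lambda>(C, D). C \<inter> D) ` (P \<times> Q) \<subseteq> A" using fP fQ by auto
    show "disjoint ((\<lambda>(C, D). C \<inter> D) ` (P \<times> Q))"
      unfolding disjoint_def
    proof (intro ballI impI)
      fix X Y assume X: "X \<in> (\<lambda>(C, D). C \<inter> D) ` (P \<times> Q)" and Y: "Y \<in> (\<lambda>(C, D). C \<inter> D) ` (P \<times> Q)"
        and XY: "X \<noteq> Y"
      obtain C D where CD: "C \<in> P" "D \<in> Q" "X = C \<inter> D" using X by auto
      obtain C' D' where CD': "C' \<in> P" "D' \<in> Q" "Y = C' \<inter> D'" using Y by auto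
      have "C \<noteq> C' \<or> D \<noteq> D'" using XY CD CD' by auto
      then have "C \<inter> C' = {} \<or> D \<inter> D' = {}"
      proof
        assume "C \<noteq> C'" then show ?thesis using fP(3) CD(1) CD'(1) unfolding disjoint_def by blast
      next
        assume "D \<noteq> D'" then show ?thesis using fQ(3) CD(2) CD'(2) unfolding disjoint_def by blast
      qed
      then show "X \<inter> Y = {}" using CD CD' by auto
    qed
    show "\<Union> ((\<lambda>(C, D). C \<inter> D) ` (P \<times> Q)) = \<Omega>"
    proof (rule antisym)
      show "\<Union> ((\<lambda>(C, D). C \<inter> D) ` (P \<times> Q)) \<subseteq> \<Omega>" using fP(4) by auto
      show "\<Omega> \<subseteq> \<Union> ((\<lambda>(C, D). C \<inter> D) ` (P \<times> Q))"
      proof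
        fix x assume "x \<in> \<Omega>"
        then obtain C D where "C \<in> P" "D \<in> Q" "x \<in> C" "x \<in> D" using fP(4) fQ(4) by blast
        then show "x \<in> \<Union> ((\<lambda>(C, D). C \<inter> D) ` (P \<times> Q))" by auto
      qed
    qed
  qed
  show "prefines (pinter P Q) P" "prefines (pinter P Q) Q" unfolding prefines_def pinter_def by auto
qed

lemma prefines_trans: assumes "prefines R Q" "prefines Q P" shows "prefines R P"
  unfolding prefines_def
proof
  fix E assume "E \<in> R"
  then obtain C where C: "C \<in> Q" "E \<subseteq> C" using assms(1) unfolding prefines_def by blast
  then obtain C' where "C' \<in> P" "C \<subseteq> C'" using assms(2) unfolding prefines_def by blast
  then show "\<exists>C\<in>P. E \<subseteq> C" using C(2) by (meson subset_trans)
qed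

lemma partn_triv: assumes "algebra \<Omega> A" shows "partn \<Omega> A {\<Omega>}"
proof -
  interpret algebra \<Omega> A by fact
  have "\<Omega> \<in> A" by (rule top)
  then show ?thesis unfolding partn_def disjoint_def by simp
qed

lemma partn_two: assumes "algebra \<Omega> A" "D \<in> A"
  shows "partn \<Omega> A {D, \<Omega> - D}"
proof -
  interpret algebra \<Omega> A by fact
  have "D \<subseteq> \<Omega>" using assms(2) sets_into_space by blast
  moreover have "\<Omega> - D \<in> A" using assms(2) by blast
  ultimately show ?thesis using assms(2) unfolding partn_def disjoint_def by auto
qed


definition posfa :: "'a set set \<Rightarrow> ('a set \<Rightarrow> real) \<Rightarrow> bool" where
  "posfa A \<nu> \<longleftrightarrow> fin_additive A \<nu> \<and> (\<forall>B\<in>A. 0 \<le> \<nu> B)"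

lemma fa_un: "fin_additive A \<nu> \<Longrightarrow> B \<in> A \<Longrightarrow> C \<in> A \<Longrightarrow> B \<inter> C = {} \<Longrightarrow> \<nu> (B \<union> C) = \<nu> B + \<nu> C"
  unfolding fin_additive_def by blast

lemma posfa_mono:
  assumes alg: "algebra \<Omega> A" and p: "posfa A \<nu>" and B: "B \<in> A" "C \<in> A" "B \<subseteq> C"
  shows "\<nu> B \<le> \<nu> C"
proof -
  interpret algebra \<Omega> A by fact
  have fa: "fin_additive A \<nu>" using p unfolding posfa_def by simp
  have "\<nu> (B \<union> (C - B)) = \<nu> B + \<nu> (C - B)" using B by (intro fa_un[OF fa]) auto
  moreover have "B \<union> (C - B) = C" using B by auto
  ultimately have "\<nu> C = \<nu> B + \<nu> (C - B)" by simp
  moreover have "0 \<le> \<nu> (C - B)" using p B unfolding posfa_def by auto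
  ultimately show ?thesis by simp
qed

lemma tvar_pos:
  assumes alg: "algebra \<Omega> A" and p: "posfa A \<nu>" and B: "B \<in> A"
  shows "tvar A \<nu> B = \<nu> B"
proof -
  have fa: "fin_additive A \<nu>" using p unfolding posfa_def by auto
  have "{(\<Sum>C\<in>P. \<bar>\<nu> C\<bar>) | P. finite P \<and> P \<subseteq> A \<and> disjoint P \<and> \<Union>P = B} = {\<nu> B}"
  proof (intro equalityI subsetI)
    fix x assume "x \<in> {(\<Sum>C\<in>P. \<bar>\<nu> C\<bar>) | P. finite P \<and> P \<subseteq> A \<and> disjoint P \<and> \<Union>P = B}"
    then obtain P where P: "finite P" "P \<subseteq> A" "disjoint P" "\<Union>P = B" and x: "x = (\<Sum>C\<in>P. \<bar>\<nu> C\<bar>)"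
      by auto
    have "x = (\<Sum>C\<in>P. \<nu> C)" unfolding x using P(2) p unfolding posfa_def
      by (intro sum.cong) auto
    also have "\<dots> = \<nu> (\<Union>C\<in>P. C)"
      using add_family[OF alg fa P(1), of "\<lambda>X. X"] P unfolding disjoint_def by auto
    finally show "x \<in> {\<nu> B}" using P(4) by simp
  next
    fix x assume "x \<in> {\<nu> B}"
    then have "x = (\<Sum>C\<in>{B}. \<bar>\<nu> C\<bar>)" using p B unfolding posfa_def by auto
    moreover have "finite {B} \<and> {B} \<subseteq> A \<and> disjoint {B} \<and> \<Union>{B} = B"
      using B unfolding disjoint_def by auto
    ultimately show "x \<in> {(\<Sum>C\<in>P. \<bar>\<nu> C\<bar>) | P. finite P \<and> P \<subseteq> A \<and> disjoint P \<and> \<Union>P = B}"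
      by blast
  qed
  then show ?thesis unfolding tvar_def by simp
qed

lemma posfa_ba:
  assumes alg: "algebra \<Omega> A" and p: "posfa A \<nu>"
  shows "\<nu> \<in> ba_pos \<Omega> A"
proof -
  interpret algebra \<Omega> A by fact
  have "{(\<Sum>C\<in>P. \<bar>\<nu> C\<bar>) | P. finite P \<and> P \<subseteq> A \<and> disjoint P \<and> \<Union>P = \<Omega>} \<subseteq> {\<nu> \<Omega>}"
  proof
    fix x assume "x \<in> {(\<Sum>C\<in>P. \<bar>\<nu> C\<bar>) | P. finite P \<and> P \<subseteq> A \<and> disjoint P \<and> \<Union>P = \<Omega>}"
    then obtain P where P: "partn \<Omega> A P" and x: "x = (\<Sum>C\<in>P. \<bar>\<nu> C\<bar>)"
      unfolding partn_def by auto
    have "x = (\<Sum>C\<in>P. \<nu> C)" unfolding x using P p unfolding posfa_def partn_def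
      by (intro sum.cong) auto
    also have "\<dots> = \<nu> \<Omega>" using partn_sum[OF alg _ P] p unfolding posfa_def by auto
    finally show "x \<in> {\<nu> \<Omega>}" by simp
  qed
  then have "bdd_above {(\<Sum>C\<in>P. \<bar>\<nu> C\<bar>) | P. finite P \<and> P \<subseteq> A \<and> disjoint P \<and> \<Union>P = \<Omega>}"
    by (meson bdd_above_empty bdd_above_insert bdd_above_mono)
  then show ?thesis using p unfolding ba_pos_def ba_def posfa_def by auto
qed

lemma ba_pos_posfa: "\<nu> \<in> ba_pos \<Omega> A \<Longrightarrow> posfa A \<nu>"
  unfolding ba_pos_def ba_def posfa_def by auto

lemma norm_le:
  assumes alg: "algebra \<Omega> A" and H: "\<And>P. partn \<Omega> A P \<Longrightarrow> (\<Sum>C\<in>P. \<bar>\<rho> C\<bar>) \<le> e"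
  shows "0 \<le> ba_norm \<Omega> A \<rho>" "ba_norm \<Omega> A \<rho> \<le> e"
proof -
  let ?S = "{(\<Sum>C\<in>P. \<bar>\<rho> C\<bar>) | P. finite P \<and> P \<subseteq> A \<and> disjoint P \<and> \<Union>P = \<Omega>}"
  have t: "partn \<Omega> A {\<Omega>}" by (rule partn_triv[OF alg])
  have t2: "finite {\<Omega>} \<and> {\<Omega>} \<subseteq> A \<and> disjoint {\<Omega>} \<and> \<Union>{\<Omega>} = \<Omega>"
    using t unfolding partn_def by simp
  have "(\<Sum>C\<in>{\<Omega>}. \<bar>\<rho> C\<bar>) \<in> ?S" unfolding mem_Collect_eq
    by (rule exI[of _ "{\<Omega>}"]) (use t2 in simp)
  then have m: "\<bar>\<rho> \<Omega>\<bar> \<in> ?S" by simp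
  have b: "x \<le> e" if x: "x \<in> ?S" for x
  proof -
    obtain P where P: "finite P" "P \<subseteq> A" "disjoint P" "\<Union>P = \<Omega>" and xe: "x = (\<Sum>C\<in>P. \<bar>\<rho> C\<bar>)"
      using x by blast
    have "partn \<Omega> A P" using P unfolding partn_def by simp
    then show ?thesis using H xe by simp
  qed
  have bd: "bdd_above ?S" by (rule bdd_aboveI[of _ e]) (rule b)
  show "ba_norm \<Omega> A \<rho> \<le> e" unfolding ba_norm_def tvar_def
    using m b by (intro cSup_least) auto
  have "\<bar>\<rho> \<Omega>\<bar> \<le> Sup ?S" by (rule cSup_upper[OF m bd])
  then show "0 \<le> ba_norm \<Omega> A \<rho>" unfolding ba_norm_def tvar_def by linarith
qed

section \<open>Infimum\<close>

lemma binf_set_props: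
  assumes alg: "algebra \<Omega> A" and pm: "posfa A \<mu>" and pn: "posfa A \<nu>" and B: "B \<in> A"
  shows "{\<mu> C + \<nu> (B - C) | C. C \<in> A \<and> C \<subseteq> B} \<noteq> {}"
    "bdd_below {\<mu> C + \<nu> (B - C) | C. C \<in> A \<and> C \<subseteq> B}"
proof -
  interpret algebra \<Omega> A by fact
  show "{\<mu> C + \<nu> (B - C) | C. C \<in> A \<and> C \<subseteq> B} \<noteq> {}" by auto
  show "bdd_below {\<mu> C + \<nu> (B - C) | C. C \<in> A \<and> C \<subseteq> B}"
    using pm pn B unfolding posfa_def by (intro bdd_belowI[of _ 0]) (auto intro!: add_nonneg_nonneg)
qed

lemma binf_lower:
  assumes alg: "algebra \<Omega> A" and pm: "posfa A \<mu>" and pn: "posfa A \<nu>" and B: "B \<in> A"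
    and D: "D \<in> A" "D \<subseteq> B"
  shows "ba_inf A \<mu> \<nu> B \<le> \<mu> D + \<nu> (B - D)"
  unfolding ba_inf_def using binf_set_props[OF assms(1-4)] D
  by (intro cInf_lower) auto

lemma binf_greatest:
  assumes alg: "algebra \<Omega> A" and pm: "posfa A \<mu>" and pn: "posfa A \<nu>" and B: "B \<in> A"
    and H: "\<And>D. D \<in> A \<Longrightarrow> D \<subseteq> B \<Longrightarrow> x \<le> \<mu> D + \<nu> (B - D)"
  shows "x \<le> ba_inf A \<mu> \<nu> B"
  unfolding ba_inf_def using binf_set_props[OF assms(1-4)] H
  by (intro cInf_greatest) auto

lemma binf_attain:
  assumes alg: "algebra \<Omega> A" and pm: "posfa A \<mu>" and pn: "posfa A \<nu>" and B: "B \<in> A"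
    and e: "0 < e"
  shows "\<exists>D\<in>A. D \<subseteq> B \<and> \<mu> D + \<nu> (B - D) < ba_inf A \<mu> \<nu> B + e"
proof -
  have "Inf {\<mu> C + \<nu> (B - C) | C. C \<in> A \<and> C \<subseteq> B} < ba_inf A \<mu> \<nu> B + e"
    using e unfolding ba_inf_def by simp
  from cInf_lessD[OF binf_set_props(1)[OF assms(1-4)] this] show ?thesis by auto
qed

lemma binf_bounds:
  assumes alg: "algebra \<Omega> A" and pm: "posfa A \<mu>" and pn: "posfa A \<nu>" and B: "B \<in> A"
  shows "0 \<le> ba_inf A \<mu> \<nu> B" "ba_inf A \<mu> \<nu> B \<le> \<mu> B" "ba_inf A \<mu> \<nu> B \<le> \<nu> B"
proof -
  interpret algebra \<Omega> A by fact
  have e1: "\<mu> {} = 0" "\<nu> {} = 0" using pm pn fa_empty unfolding posfa_def by auto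
  show "0 \<le> ba_inf A \<mu> \<nu> B"
  proof (rule binf_greatest[OF assms])
    fix D assume D: "D \<in> A" "D \<subseteq> B"
    then have "B - D \<in> A" using B by auto
    then show "0 \<le> \<mu> D + \<nu> (B - D)" using pm pn D(1) unfolding posfa_def
      by (simp add: add_nonneg_nonneg)
  qed
  show "ba_inf A \<mu> \<nu> B \<le> \<mu> B" using binf_lower[OF assms B order_refl] e1 by simp
  show "ba_inf A \<mu> \<nu> B \<le> \<nu> B" using binf_lower[OF assms empty_sets] e1 by simp
qed

lemma binf_fa:
  assumes alg: "algebra \<Omega> A" and pm: "posfa A \<mu>" and pn: "posfa A \<nu>"
  shows "posfa A (ba_inf A \<mu> \<nu>)"
proof -
  interpret algebra \<Omega> A by fact
  have fm: "fin_additive A \<mu>" and fn: "fin_additive A \<nu>" using pm pn unfolding posfa_def by auto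
  have "ba_inf A \<mu> \<nu> (B \<union> C) = ba_inf A \<mu> \<nu> B + ba_inf A \<mu> \<nu> C"
    if B: "B \<in> A" and C: "C \<in> A" and BC: "B \<inter> C = {}" for B C
  proof (rule antisym)
    have BuC: "B \<union> C \<in> A" using B C by auto
    have "ba_inf A \<mu> \<nu> (B \<union> C) - ba_inf A \<mu> \<nu> C \<le> ba_inf A \<mu> \<nu> B"
    proof (rule binf_greatest[OF alg pm pn B])
      fix D1 assume D1: "D1 \<in> A" "D1 \<subseteq> B"
      have "ba_inf A \<mu> \<nu> (B \<union> C) - (\<mu> D1 + \<nu> (B - D1)) \<le> ba_inf A \<mu> \<nu> C"
      proof (rule binf_greatest[OF alg pm pn C])
        fix D2 assume D2: "D2 \<in> A" "D2 \<subseteq> C"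
        have d: "D1 \<union> D2 \<in> A" "D1 \<union> D2 \<subseteq> B \<union> C" using D1 D2 by auto
        have "ba_inf A \<mu> \<nu> (B \<union> C) \<le> \<mu> (D1 \<union> D2) + \<nu> ((B \<union> C) - (D1 \<union> D2))"
          by (rule binf_lower[OF alg pm pn BuC d])
        also have "\<mu> (D1 \<union> D2) = \<mu> D1 + \<mu> D2"
          using D1 D2 BC by (intro fa_un[OF fm]) auto
        also have "(B \<union> C) - (D1 \<union> D2) = (B - D1) \<union> (C - D2)" using D1 D2 BC by auto
        also have "\<nu> ((B - D1) \<union> (C - D2)) = \<nu> (B - D1) + \<nu> (C - D2)"
          using D1 D2 BC B C by (intro fa_un[OF fn]) auto
        finally show "ba_inf A \<mu> \<nu> (B \<union> C) - (\<mu> D1 + \<nu> (B - D1)) \<le> \<mu> D2 + \<nu> (C - D2)"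
          by linarith
      qed
      then show "ba_inf A \<mu> \<nu> (B \<union> C) - ba_inf A \<mu> \<nu> C \<le> \<mu> D1 + \<nu> (B - D1)" by linarith
    qed
    then show "ba_inf A \<mu> \<nu> (B \<union> C) \<le> ba_inf A \<mu> \<nu> B + ba_inf A \<mu> \<nu> C" by linarith
    show "ba_inf A \<mu> \<nu> B + ba_inf A \<mu> \<nu> C \<le> ba_inf A \<mu> \<nu> (B \<union> C)"
    proof (rule binf_greatest[OF alg pm pn BuC])
      fix D assume D: "D \<in> A" "D \<subseteq> B \<union> C"
      have 1: "ba_inf A \<mu> \<nu> B \<le> \<mu> (D \<inter> B) + \<nu> (B - D \<inter> B)"
        using D B by (intro binf_lower[OF alg pm pn B]) auto
      have 2: "ba_inf A \<mu> \<nu> C \<le> \<mu> (D \<inter> C) + \<nu> (C - D \<inter> C)"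
        using D C by (intro binf_lower[OF alg pm pn C]) auto
      have "\<mu> D = \<mu> (D \<inter> B) + \<mu> (D \<inter> C)"
      proof -
        have "(D \<inter> B) \<union> (D \<inter> C) = D" using D by auto
        moreover have "\<mu> ((D \<inter> B) \<union> (D \<inter> C)) = \<mu> (D \<inter> B) + \<mu> (D \<inter> C)"
          using D B C BC by (intro fa_un[OF fm]) auto
        ultimately show ?thesis by simp
      qed
      moreover have "\<nu> ((B \<union> C) - D) = \<nu> (B - D \<inter> B) + \<nu> (C - D \<inter> C)"
      proof -
        have "(B - D \<inter> B) \<union> (C - D \<inter> C) = (B \<union> C) - D" by auto
        moreover have "\<nu> ((B - D \<inter> B) \<union> (C - D \<inter> C)) = \<nu> (B - D \<inter> B) + \<nu> (C - D \<inter> C)"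
          using D B C BC by (intro fa_un[OF fn]) auto
        ultimately show ?thesis by simp
      qed
      ultimately show "ba_inf A \<mu> \<nu> B + ba_inf A \<mu> \<nu> C \<le> \<mu> D + \<nu> (B \<union> C - D)"
        using 1 2 by linarith
    qed
  qed
  then have "fin_additive A (ba_inf A \<mu> \<nu>)" unfolding fin_additive_def by auto
  moreover have "\<forall>B\<in>A. 0 \<le> ba_inf A \<mu> \<nu> B" using binf_bounds(1)[OF assms] by auto
  ultimately show ?thesis unfolding posfa_def by auto
qed


locale setting =
  fixes \<Omega> :: "'a set" and A :: "'a set set" and \<mu> :: "nat \<Rightarrow> 'a set \<Rightarrow> real" and K :: real
  assumes alg: "algebra \<Omega> A"
    and pos: "\<And>n. posfa A (\<mu> n)"
    and bnd: "\<And>n. \<mu> n \<Omega> \<le> K"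
begin

definition lam :: "'a set \<Rightarrow> real" where "lam B = (\<Sum>n. \<mu> n B / 2 ^ n)"

lemma top: "\<Omega> \<in> A" using alg algebra.top by blast

lemma mu_le: assumes B: "B \<in> A" shows "\<mu> n B \<le> K"
proof -
  interpret algebra \<Omega> A by (rule alg)
  have "B \<subseteq> \<Omega>" using B sets_into_space by blast
  then have "\<mu> n B \<le> \<mu> n \<Omega>" using posfa_mono[OF alg pos B top] by simp
  then show ?thesis using bnd[of n] by simp
qed

lemma mu_nn: "B \<in> A \<Longrightarrow> 0 \<le> \<mu> n B" using pos[of n] unfolding posfa_def by auto

lemma lam_summable: assumes "B \<in> A" shows "summable (\<lambda>n. \<mu> n B / 2 ^ n)"
proof (rule summable_comparison_test')
  show "summable (\<lambda>n. K * (1/2) ^ n)" by (intro summable_mult summable_geometric) simp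
  fix n
  have "\<mu> n B / 2 ^ n = \<mu> n B * (1/2) ^ n" by (simp add: power_divide)
  also have "\<dots> \<le> K * (1/2) ^ n" using mu_le[OF assms] by (intro mult_right_mono) auto
  finally show "norm (\<mu> n B / 2 ^ n) \<le> K * (1/2) ^ n" using mu_nn[OF assms, of n] by simp
qed

lemma lam_posfa: "posfa A lam"
  unfolding posfa_def fin_additive_def
proof (intro conjI ballI impI)
  fix B assume "B \<in> A"
  then show "0 \<le> lam B" unfolding lam_def using lam_summable mu_nn by (intro suminf_nonneg) auto
next
  fix B C assume B: "B \<in> A" and C: "C \<in> A" and BC: "B \<inter> C = {}"
  have e: "\<mu> n (B \<union> C) = \<mu> n B + \<mu> n C" for n
  proof -
    have "fin_additive A (\<mu> n)" using pos[of n] unfolding posfa_def by simp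
    then show ?thesis using fa_un B C BC by blast
  qed
  have "lam (B \<union> C) = (\<Sum>n. \<mu> n B / 2 ^ n + \<mu> n C / 2 ^ n)" unfolding lam_def
    by (simp add: e add_divide_distrib)
  also have "\<dots> = lam B + lam C" unfolding lam_def
    by (rule suminf_add[symmetric]) (use lam_summable B C in auto)
  finally show "lam (B \<union> C) = lam B + lam C" .
qed

lemma lam_nn: "B \<in> A \<Longrightarrow> 0 \<le> lam B" using lam_posfa unfolding posfa_def by auto

lemma klam_posfa: "posfa A (\<lambda>C. c * lam C)" if "0 \<le> c" for c
  using lam_posfa that unfolding posfa_def fin_additive_def by (auto simp: distrib_left)

lemma tail_posfa: assumes "m \<in> tail_co \<mu> n" shows "posfa A m"
proof -
  obtain F c where m: "m = (\<lambda>B. \<Sum>i\<in>F. c i * \<mu> i B)" and F: "finite F" "F \<noteq> {}" "F \<subseteq> {n..}"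
    "\<forall>i\<in>F. 0 \<le> c i" "sum c F = 1" using assms unfolding tail_co_def by blast
  show ?thesis unfolding posfa_def fin_additive_def m
  proof (intro conjI ballI impI)
    fix B assume "B \<in> A"
    then show "0 \<le> (\<Sum>i\<in>F. c i * \<mu> i B)" using F(4) mu_nn by (intro sum_nonneg mult_nonneg_nonneg) auto
  next
    fix B C assume B: "B \<in> A" and C: "C \<in> A" and BC: "B \<inter> C = {}"
    have "\<mu> i (B \<union> C) = \<mu> i B + \<mu> i C" for i
    proof -
      have "fin_additive A (\<mu> i)" using pos[of i] unfolding posfa_def by simp
      then show ?thesis using fa_un B C BC by blast
    qed
    then show "(\<Sum>i\<in>F. c i * \<mu> i (B \<union> C)) = (\<Sum>i\<in>F. c i * \<mu> i B) + (\<Sum>i\<in>F. c i * \<mu> i C)"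
      by (simp add: distrib_left sum.distrib)
  qed
qed

lemma tail_le: assumes "m \<in> tail_co \<mu> n" "B \<in> A" shows "m B \<le> K"
proof -
  obtain F c where m: "m = (\<lambda>B. \<Sum>i\<in>F. c i * \<mu> i B)" and F: "finite F" "F \<noteq> {}" "F \<subseteq> {n..}"
    "\<forall>i\<in>F. 0 \<le> c i" "sum c F = 1" using assms unfolding tail_co_def by blast
  have "m B \<le> (\<Sum>i\<in>F. c i * K)" unfolding m using F(4) mu_le[OF assms(2)]
    by (intro sum_mono mult_left_mono) auto
  also have "\<dots> = K" using F(5) by (simp add: sum_distrib_right[symmetric])
  finally show ?thesis .
qed

lemma tail_self: "\<mu> n \<in> tail_co \<mu> n"
proof -
  have "\<mu> n = (\<lambda>B. \<Sum>i\<in>{n}. (\<lambda>_. 1::real) i * \<mu> i B)" by simp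
  then show ?thesis unfolding tail_co_def
    by (intro CollectI exI[of _ "{n}"] exI[of _ "\<lambda>_. 1::real"]) auto
qed

lemma tail_mono: assumes "n \<le> p" "m \<in> tail_co \<mu> p" shows "m \<in> tail_co \<mu> n"
proof -
  obtain F c where m: "m = (\<lambda>B. \<Sum>i\<in>F. c i * \<mu> i B)" and F: "finite F" "F \<noteq> {}" "F \<subseteq> {p..}"
    "\<forall>i\<in>F. 0 \<le> c i" "sum c F = 1" using assms(2) unfolding tail_co_def by blast
  have "F \<subseteq> {n..}" using F(3) assms(1) by auto
  then show ?thesis unfolding tail_co_def using m F(1,2,4,5)
    by (intro CollectI exI[of _ F] exI[of _ c]) simp
qed

lemma tail_mid: assumes "m \<in> tail_co \<mu> n" "m' \<in> tail_co \<mu> n"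
  shows "(\<lambda>B. (m B + m' B) / 2) \<in> tail_co \<mu> n"
proof -
  obtain F c where m: "m = (\<lambda>B. \<Sum>i\<in>F. c i * \<mu> i B)" and F: "finite F" "F \<noteq> {}" "F \<subseteq> {n..}"
    "\<forall>i\<in>F. 0 \<le> c i" "sum c F = 1" using assms(1) unfolding tail_co_def by blast
  obtain G d where m': "m' = (\<lambda>B. \<Sum>i\<in>G. d i * \<mu> i B)" and G: "finite G" "G \<noteq> {}" "G \<subseteq> {n..}"
    "\<forall>i\<in>G. 0 \<le> d i" "sum d G = 1" using assms(2) unfolding tail_co_def by blast
  define c' where "c' i = (if i \<in> F then c i else 0)" for i
  define d' where "d' i = (if i \<in> G then d i else 0)" for i
  define e where "e i = (c' i + d' i) / 2" for i
  have FG: "finite (F \<union> G)" using F G by auto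
  have sc: "(\<Sum>i\<in>F \<union> G. c' i * x i) = (\<Sum>i\<in>F. c i * x i)" for x :: "nat \<Rightarrow> real"
  proof -
    have "(\<Sum>i\<in>F \<union> G. c' i * x i) = (\<Sum>i\<in>F. c' i * x i)"
      by (rule sum.mono_neutral_right) (use FG in \<open>auto simp: c'_def\<close>)
    also have "\<dots> = (\<Sum>i\<in>F. c i * x i)" by (rule sum.cong) (auto simp: c'_def)
    finally show ?thesis .
  qed
  have sd: "(\<Sum>i\<in>F \<union> G. d' i * x i) = (\<Sum>i\<in>G. d i * x i)" for x :: "nat \<Rightarrow> real"
  proof -
    have "(\<Sum>i\<in>F \<union> G. d' i * x i) = (\<Sum>i\<in>G. d' i * x i)"
      by (rule sum.mono_neutral_right) (use FG in \<open>auto simp: d'_def\<close>)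
    also have "\<dots> = (\<Sum>i\<in>G. d i * x i)" by (rule sum.cong) (auto simp: d'_def)
    finally show ?thesis .
  qed
  have "(\<lambda>B. (m B + m' B) / 2) = (\<lambda>B. \<Sum>i\<in>F \<union> G. e i * \<mu> i B)"
  proof
    fix B
    have "(\<Sum>i\<in>F \<union> G. e i * \<mu> i B) = ((\<Sum>i\<in>F \<union> G. c' i * \<mu> i B) + (\<Sum>i\<in>F \<union> G. d' i * \<mu> i B)) / 2"
      unfolding e_def by (simp add: sum.distrib sum_divide_distrib[symmetric] algebra_simps)
    then show "(m B + m' B) / 2 = (\<Sum>i\<in>F \<union> G. e i * \<mu> i B)" unfolding m m' using sc sd by simp
  qed
  moreover have "sum e (F \<union> G) = 1"
  proof -
    have "sum e (F \<union> G) = ((\<Sum>i\<in>F \<union> G. c' i * 1) + (\<Sum>i\<in>F \<union> G. d' i * 1)) / 2"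
      unfolding e_def by (simp add: sum.distrib sum_divide_distrib[symmetric])
    then show ?thesis using sc[of "\<lambda>_. 1"] sd[of "\<lambda>_. 1"] F(5) G(5) by simp
  qed
  moreover have "\<forall>i\<in>F \<union> G. 0 \<le> e i" using F(4) G(4) by (auto simp: e_def c'_def d'_def)
  ultimately show ?thesis unfolding tail_co_def using FG F(2,3) G(3)
    by (intro CollectI exI[of _ "F \<union> G"] exI[of _ e]) auto
qed

end


definition phi :: "real \<Rightarrow> real \<Rightarrow> real" where "phi a l = a * l / (a + l)"

lemma phi_nn: "0 \<le> a \<Longrightarrow> 0 \<le> l \<Longrightarrow> 0 \<le> phi a l"
  unfolding phi_def by simp

lemma phi_le: assumes "0 \<le> a" "0 \<le> l" shows "phi a l \<le> l"
proof (cases "a + l = 0")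
  case True then show ?thesis using assms by (simp add: phi_def)
next
  case False
  then have p: "0 < a + l" using assms by simp
  have "a * l \<le> l * (a + l)" using assms by (simp add: algebra_simps)
  then show ?thesis unfolding phi_def using p by (simp add: divide_le_eq)
qed

lemma phi_mult: "x + l \<noteq> 0 \<Longrightarrow> phi x l * (x + l) = x * l"
  unfolding phi_def by simp

lemma phi_zero: "phi 0 0 = 0" unfolding phi_def by simp

lemma phi_superadd:
  assumes "0 \<le> a1" "0 \<le> a2" "0 \<le> l1" "0 \<le> l2"
  shows "phi a1 l1 + phi a2 l2 \<le> phi (a1 + a2) (l1 + l2)"
proof (cases "a1 + l1 = 0 \<or> a2 + l2 = 0")
  case True
  then show ?thesis
  proof
    assume "a1 + l1 = 0" then have "a1 = 0" "l1 = 0" using assms by auto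
    then show ?thesis by (simp add: phi_def)
  next
    assume "a2 + l2 = 0" then have "a2 = 0" "l2 = 0" using assms by auto
    then show ?thesis by (simp add: phi_def)
  qed
next
  case False
  then have p1: "0 < a1 + l1" and p2: "0 < a2 + l2" using assms by auto
  let ?S = "a1 + a2 + (l1 + l2)"
  have p3: "0 < ?S" using p1 p2 by simp
  have e1: "phi a1 l1 * (a1 + l1) = a1 * l1" using p1 by (simp add: phi_def)
  have e2: "phi a2 l2 * (a2 + l2) = a2 * l2" using p2 by (simp add: phi_def)
  have e3: "phi (a1 + a2) (l1 + l2) * ?S = (a1 + a2) * (l1 + l2)" using p3 by (simp add: phi_def)
  have "(phi (a1 + a2) (l1 + l2) - phi a1 l1 - phi a2 l2) * ((a1 + l1) * (a2 + l2) * ?S)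
     = (phi (a1 + a2) (l1 + l2) * ?S) * (a1 + l1) * (a2 + l2)
       - (phi a1 l1 * (a1 + l1)) * (a2 + l2) * ?S - (phi a2 l2 * (a2 + l2)) * (a1 + l1) * ?S"
    by (simp add: algebra_simps)
  also have "\<dots> = (a1 * l2 - a2 * l1)^2" unfolding e1 e2 e3
    by (simp add: algebra_simps power2_eq_square)
  finally have "0 \<le> (phi (a1 + a2) (l1 + l2) - phi a1 l1 - phi a2 l2) * ((a1 + l1) * (a2 + l2) * ?S)"
    by simp
  moreover have "0 < (a1 + l1) * (a2 + l2) * ?S" using p1 p2 p3 by simp
  ultimately have "0 \<le> phi (a1 + a2) (l1 + l2) - phi a1 l1 - phi a2 l2"
    by (simp add: zero_le_mult_iff)
  then show ?thesis by linarith
qed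

lemma gain_id:
  assumes "0 \<le> a" "0 \<le> b" "0 < l"
  shows "(phi ((a + b) / 2) l - (phi a l + phi b l) / 2) * (2 * (a + l) * (b + l) * (a + b + 2 * l))
     = l^2 * (a - b)^2"
proof -
  have p1: "0 < a + l" "0 < b + l" "0 < a + b + 2 * l" using assms by auto
  have e1: "phi a l * (a + l) = a * l" using p1 by (simp add: phi_def)
  have e2: "phi b l * (b + l) = b * l" using p1 by (simp add: phi_def)
  have "0 \<le> (a + b) / 2" using assms by simp
  then have p4: "0 < (a + b) / 2 + l" using assms(3) by (rule add_nonneg_pos)
  have h: "phi ((a + b) / 2) l * ((a + b) / 2 + l) = (a + b) / 2 * l"
    using p4 by (intro phi_mult) simp
  have "phi ((a + b) / 2) l * (a + b + 2 * l) = 2 * (phi ((a + b) / 2) l * ((a + b) / 2 + l))"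
    by (simp add: algebra_simps)
  then have e3: "phi ((a + b) / 2) l * (a + b + 2 * l) = (a + b) * l"
    unfolding h by simp
  have "(phi ((a + b) / 2) l - (phi a l + phi b l) / 2) * (2 * (a + l) * (b + l) * (a + b + 2 * l))
     = 2 * (phi ((a + b) / 2) l * (a + b + 2 * l)) * (a + l) * (b + l)
       - (phi a l * (a + l)) * (b + l) * (a + b + 2 * l) - (phi b l * (b + l)) * (a + l) * (a + b + 2 * l)"
    by (simp add: field_simps)
  also have "\<dots> = l^2 * (a - b)^2" unfolding e1 e2 e3
    by (simp add: algebra_simps power2_eq_square)
  finally show ?thesis .
qed

lemma amgm:
  fixes x C l g t :: real
  assumes "x^2 \<le> C * l * g" "0 < t" "0 \<le> l" "0 \<le> C * g"
  shows "\<bar>x\<bar> \<le> (t * l + C * g / t) / 2"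
proof -
  have "((t * l + C * g / t) / 2)^2 - C * l * g = ((t * l - C * g / t) / 2)^2"
    using assms(2) by (simp add: field_simps power2_eq_square)
  then have "\<bar>x\<bar>^2 \<le> ((t * l + C * g / t) / 2)^2" using assms(1)
    by (simp add: power2_abs) (smt (verit) zero_le_power2)
  moreover have "0 \<le> (t * l + C * g / t) / 2" using assms by simp
  ultimately show ?thesis by (rule power2_le_imp_le)
qed


lemma mono3:
  fixes x y z X Y Z :: real
  assumes "0 \<le> x" "x \<le> X" "0 \<le> y" "y \<le> Y" "0 \<le> z" "z \<le> Z"
  shows "x * y * z \<le> X * Y * Z"
proof -
  have "x * y \<le> X * Y" using assms by (intro mult_mono) auto
  moreover have "0 \<le> X * Y" using assms by simp
  ultimately show ?thesis using assms by (intro mult_mono) auto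
qed

lemma gain_aux:
  fixes a b l k :: real
  assumes b: "0 \<le> b" "b \<le> a" and l: "0 < l" and k: "0 \<le> k"
  shows "(min a (k * l) - min b (k * l))^2 * (2 * (a + l) * (b + l) * (a + b + 2 * l))
      \<le> 12 * (k + 1)^3 * l^3 * (a - b)^2"
proof -
  have D0: "0 \<le> 2 * (a + l) * (b + l) * (a + b + 2 * l)" using b l by simp
  consider "a \<le> k * l" | "k * l \<le> b" | "b < k * l" "k * l < a" by linarith
  then show ?thesis
  proof cases
    case 1
    then have m: "min a (k * l) = a" "min b (k * l) = b" using b by auto
    have "(a + l) * (b + l) * (a + b + 2 * l) \<le> ((k + 1) * l) * ((k + 1) * l) * (2 * (k + 1) * l)"
      using 1 b l by (intro mono3) (auto simp: algebra_simps)
    also have "\<dots> = 2 * (k + 1)^3 * l^3" by (simp add: power3_eq_cube algebra_simps)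
    finally have P: "(a + l) * (b + l) * (a + b + 2 * l) \<le> 2 * (k + 1)^3 * l^3" .
    have "0 \<le> (k + 1)^3 * l^3" using k l by simp
    moreover have "2 * (a + l) * (b + l) * (a + b + 2 * l) = 2 * ((a + l) * (b + l) * (a + b + 2 * l))"
      by simp
    ultimately have "2 * (a + l) * (b + l) * (a + b + 2 * l) \<le> 12 * (k + 1)^3 * l^3"
      using P by linarith
    then have "(a - b)^2 * (2 * (a + l) * (b + l) * (a + b + 2 * l)) \<le> (a - b)^2 * (12 * (k + 1)^3 * l^3)"
      by (intro mult_left_mono) auto
    then show ?thesis unfolding m by (simp add: algebra_simps)
  next
    case 2
    then have m: "min a (k * l) = k * l" "min b (k * l) = k * l" using b by auto
    show ?thesis unfolding m using l k by simp
  next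
    case 3
    then have m: "min a (k * l) = k * l" "min b (k * l) = b" by auto
    define s where "s = k * l - b"
    define t where "t = a - b"
    have s0: "0 \<le> s" and st: "s \<le> t" and sk: "s \<le> k * l" using 3 b by (auto simp: s_def t_def)
    have t0: "0 \<le> t" using b by (simp add: t_def)
    have bl: "b + l \<le> k * l + l" using 3 by simp
    have h1: "s * (b + l) \<le> t * (k * l + l)" using s0 st bl b l by (intro mult_mono) auto
    have h2: "s * t \<le> k * l * t" using sk t0 by (intro mult_right_mono)
    have X: "s * (a + l) \<le> t * l * (2 * k + 1)"
    proof -
      have "s * (a + l) = s * (b + l) + s * t" by (simp add: t_def algebra_simps)
      also have "\<dots> \<le> t * (k * l + l) + k * l * t" using h1 h2 by linarith
      also have "\<dots> = t * l * (2 * k + 1)" by (simp add: algebra_simps)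
      finally show ?thesis .
    qed
    have Y: "s * (a + b + 2 * l) \<le> t * l * (3 * k + 2)"
    proof -
      have "s * (a + b + 2 * l) = 2 * (s * (b + l)) + s * t" by (simp add: t_def algebra_simps)
      also have "\<dots> \<le> 2 * (t * (k * l + l)) + k * l * t" using h1 h2 by linarith
      also have "\<dots> = t * l * (3 * k + 2)" by (simp add: algebra_simps)
      finally show ?thesis .
    qed
    have "(min a (k * l) - min b (k * l))^2 * (2 * (a + l) * (b + l) * (a + b + 2 * l))
        = 2 * ((b + l) * (s * (a + l)) * (s * (a + b + 2 * l)))"
      unfolding m s_def by (simp add: power2_eq_square algebra_simps)
    also have "(b + l) * (s * (a + l)) * (s * (a + b + 2 * l))
        \<le> ((k + 1) * l) * (t * l * (2 * k + 1)) * (t * l * (3 * k + 2))"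
      using b l s0 X Y bl by (intro mono3) (auto simp: algebra_simps)
    also have "((k + 1) * l) * (t * l * (2 * k + 1)) * (t * l * (3 * k + 2))
        = ((k + 1) * (2 * k + 1) * (3 * k + 2)) * (l^3 * t^2)"
      by (simp add: power2_eq_square power3_eq_cube algebra_simps)
    also have "\<dots> \<le> (6 * (k + 1)^3) * (l^3 * t^2)"
    proof (rule mult_right_mono)
      have "(k + 1) * (2 * k + 1) * (3 * k + 2) \<le> (k + 1) * (2 * (k + 1)) * (3 * (k + 1))"
        using k by (intro mono3) auto
      then show "(k + 1) * (2 * k + 1) * (3 * k + 2) \<le> 6 * (k + 1)^3"
        by (simp add: power3_eq_cube algebra_simps)
      show "0 \<le> l^3 * t^2" using l by simp
    qed
    finally show ?thesis by (simp add: t_def algebra_simps)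
  qed
qed

lemma gain_ineq:
  fixes a b l k :: real
  assumes "0 \<le> a" "0 \<le> b" "0 \<le> l" "0 \<le> k"
  shows "(min a (k * l) - min b (k * l))^2
      \<le> 12 * (k + 1)^3 * l * (phi ((a + b) / 2) l - (phi a l + phi b l) / 2)"
proof (cases "l = 0")
  case True
  then show ?thesis using assms by (simp add: phi_def)
next
  case False
  then have l: "0 < l" using assms by simp
  define G where "G = phi ((a + b) / 2) l - (phi a l + phi b l) / 2"
  define D where "D = 2 * (a + l) * (b + l) * (a + b + 2 * l)"
  have D: "0 < D" unfolding D_def using assms l by simp
  have GD: "G * D = l^2 * (a - b)^2" unfolding G_def D_def by (rule gain_id[OF assms(1,2) l])
  have key: "(min a (k * l) - min b (k * l))^2 * D \<le> 12 * (k + 1)^3 * l^3 * (a - b)^2"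
  proof (cases "b \<le> a")
    case True
    then show ?thesis unfolding D_def using gain_aux[OF assms(2) True l assms(4)] by simp
  next
    case False
    have "(min b (k * l) - min a (k * l))^2 * (2 * (b + l) * (a + l) * (b + a + 2 * l))
        \<le> 12 * (k + 1)^3 * l^3 * (b - a)^2"
      using False by (intro gain_aux[OF assms(1) _ l assms(4)]) simp
    then show ?thesis unfolding D_def by (simp add: power2_commute algebra_simps)
  qed
  also have "\<dots> = 12 * (k + 1)^3 * l * (l^2 * (a - b)^2)"
    by (simp add: power2_eq_square power3_eq_cube algebra_simps)
  also have "\<dots> = (12 * (k + 1)^3 * l * G) * D"
    unfolding GD[symmetric] by (simp add: algebra_simps)
  finally show ?thesis unfolding G_def[symmetric] using D
    by (simp add: mult_le_cancel_right)
qed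


context setting
begin

definition J :: "('a set \<Rightarrow> real) \<Rightarrow> real" where
  "J m = Inf {(\<Sum>C\<in>P. phi (m C) (lam C)) | P. partn \<Omega> A P}"

lemma phiset_superadd:
  assumes "posfa A m" shows "superadd A (\<lambda>C. phi (m C) (lam C))"
  unfolding superadd_def
proof (intro ballI impI)
  fix X Y assume X: "X \<in> A" and Y: "Y \<in> A" and XY: "X \<inter> Y = {}"
  have fm: "fin_additive A m" using assms unfolding posfa_def by simp
  have fl: "fin_additive A lam" using lam_posfa unfolding posfa_def by simp
  have "m (X \<union> Y) = m X + m Y" by (rule fa_un[OF fm X Y XY])
  moreover have "lam (X \<union> Y) = lam X + lam Y" by (rule fa_un[OF fl X Y XY])
  moreover have "0 \<le> m X" "0 \<le> m Y" using assms X Y unfolding posfa_def by auto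
  moreover have "0 \<le> lam X" "0 \<le> lam Y" using lam_nn X Y by auto
  ultimately show "phi (m X) (lam X) + phi (m Y) (lam Y) \<le> phi (m (X \<union> Y)) (lam (X \<union> Y))"
    by (simp add: phi_superadd)
qed

lemma empty_vals: assumes "posfa A m" shows "m {} = 0" "lam {} = 0"
proof -
  interpret algebra \<Omega> A by (rule alg)
  show "m {} = 0" using assms fa_empty unfolding posfa_def by blast
  show "lam {} = 0" using lam_posfa fa_empty unfolding posfa_def by blast
qed

lemma minset_superadd:
  assumes "posfa A m" "0 \<le> k" shows "superadd A (\<lambda>C. min (m C) (k * lam C))"
  unfolding superadd_def
proof (intro ballI impI)
  fix X Y assume X: "X \<in> A" and Y: "Y \<in> A" and XY: "X \<inter> Y = {}"
  have fm: "fin_additive A m" using assms unfolding posfa_def by simp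
  have fl: "fin_additive A lam" using lam_posfa unfolding posfa_def by simp
  have "m (X \<union> Y) = m X + m Y" by (rule fa_un[OF fm X Y XY])
  moreover have "lam (X \<union> Y) = lam X + lam Y" by (rule fa_un[OF fl X Y XY])
  ultimately show "min (m X) (k * lam X) + min (m Y) (k * lam Y) \<le> min (m (X \<union> Y)) (k * lam (X \<union> Y))"
    by (auto simp: distrib_left min_def)
qed

lemma J_set_props:
  assumes "posfa A m"
  shows "{(\<Sum>C\<in>P. phi (m C) (lam C)) | P. partn \<Omega> A P} \<noteq> {}"
    "bdd_below {(\<Sum>C\<in>P. phi (m C) (lam C)) | P. partn \<Omega> A P}"
    "\<And>P. partn \<Omega> A P \<Longrightarrow> 0 \<le> (\<Sum>C\<in>P. phi (m C) (lam C))"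
proof -
  show "{(\<Sum>C\<in>P. phi (m C) (lam C)) | P. partn \<Omega> A P} \<noteq> {}" using partn_triv[OF alg] by blast
  show nn: "0 \<le> (\<Sum>C\<in>P. phi (m C) (lam C))" if P: "partn \<Omega> A P" for P
  proof (rule sum_nonneg)
    fix C assume "C \<in> P"
    then have "C \<in> A" using P unfolding partn_def by auto
    then show "0 \<le> phi (m C) (lam C)" using assms lam_nn unfolding posfa_def by (simp add: phi_nn)
  qed
  show "bdd_below {(\<Sum>C\<in>P. phi (m C) (lam C)) | P. partn \<Omega> A P}"
    by (rule bdd_belowI[of _ 0]) (use nn in blast)
qed

lemma J_lower: "posfa A m \<Longrightarrow> partn \<Omega> A P \<Longrightarrow> J m \<le> (\<Sum>C\<in>P. phi (m C) (lam C))"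
  unfolding J_def by (rule cInf_lower) (auto dest: J_set_props(2))

lemma J_attain:
  assumes "posfa A m" "0 < e"
  shows "\<exists>P. partn \<Omega> A P \<and> (\<Sum>C\<in>P. phi (m C) (lam C)) < J m + e"
proof -
  have "Inf {(\<Sum>C\<in>P. phi (m C) (lam C)) | P. partn \<Omega> A P} < J m + e" using assms(2) unfolding J_def by simp
  from cInf_lessD[OF J_set_props(1)[OF assms(1)] this] show ?thesis by blast
qed

lemma J_nn: "posfa A m \<Longrightarrow> 0 \<le> J m"
  unfolding J_def by (rule cInf_greatest[OF J_set_props(1)]) (auto dest: J_set_props(3))

lemma J_le: assumes "posfa A m" shows "J m \<le> lam \<Omega>"
proof -
  have "J m \<le> (\<Sum>C\<in>{\<Omega>}. phi (m C) (lam C))" by (rule J_lower[OF assms partn_triv[OF alg]])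
  also have "\<dots> \<le> lam \<Omega>" using assms lam_nn[OF top] top unfolding posfa_def by (simp add: phi_le)
  finally show ?thesis .
qed

definition sv :: "nat \<Rightarrow> real" where "sv N = Sup (J ` tail_co \<mu> N)"

lemma sv_props:
  shows "J ` tail_co \<mu> N \<noteq> {}" "bdd_above (J ` tail_co \<mu> N)"
    "\<And>m. m \<in> tail_co \<mu> N \<Longrightarrow> J m \<le> sv N" "0 \<le> sv N"
proof -
  show ne: "J ` tail_co \<mu> N \<noteq> {}" using tail_self by blast
  show bd: "bdd_above (J ` tail_co \<mu> N)"
    by (rule bdd_aboveI[of _ "lam \<Omega>"]) (auto intro: J_le tail_posfa)
  show up: "\<And>m. m \<in> tail_co \<mu> N \<Longrightarrow> J m \<le> sv N" unfolding sv_def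
    by (rule cSup_upper[OF _ bd]) simp
  have "0 \<le> J (\<mu> N)" by (rule J_nn[OF tail_posfa[OF tail_self]])
  also have "\<dots> \<le> sv N" by (rule up[OF tail_self])
  finally show "0 \<le> sv N" .
qed

lemma sv_dec: "decseq sv"
proof (rule decseq_SucI)
  fix n
  have "tail_co \<mu> (Suc n) \<subseteq> tail_co \<mu> n" using tail_mono[of n "Suc n"] by auto
  then show "sv (Suc n) \<le> sv n" unfolding sv_def
    by (intro cSup_subset_mono sv_props(1) sv_props(2)) auto
qed

definition sl :: real where "sl = lim sv"

lemma sl_props: "sv \<longlonglongrightarrow> sl" "\<And>N. sl \<le> sv N"
proof -
  obtain L where L: "sv \<longlonglongrightarrow> L" "\<forall>i. L \<le> sv i"
    using decseq_convergent[OF sv_dec, of 0] sv_props(4) by blast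
  then have "sl = L" unfolding sl_def by (simp add: limI)
  then show "sv \<longlonglongrightarrow> sl" "\<And>N. sl \<le> sv N" using L by auto
qed

definition mm :: "nat \<Rightarrow> 'a set \<Rightarrow> real" where
  "mm N = (SOME m. m \<in> tail_co \<mu> N \<and> sv N - 1 / (real N + 1) < J m)"

lemma mm_props: "mm N \<in> tail_co \<mu> N" "sv N - 1 / (real N + 1) < J (mm N)"
proof -
  have "sv N - 1 / (real N + 1) < sv N" by simp
  then obtain x where "x \<in> J ` tail_co \<mu> N" "sv N - 1 / (real N + 1) < x"
    unfolding sv_def[of N] using less_cSupD[OF sv_props(1)] by blast
  then have "\<exists>m. m \<in> tail_co \<mu> N \<and> sv N - 1 / (real N + 1) < J m" by blast
  from someI_ex[OF this] show "mm N \<in> tail_co \<mu> N" "sv N - 1 / (real N + 1) < J (mm N)"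
    unfolding mm_def by auto
qed

lemma mm_J: "sl - 1 / (real n + 1) < J (mm n)"
  using mm_props(2)[of n] sl_props(2)[of n] by linarith

end


lemma gain_nn:
  fixes a b l :: real
  assumes "0 \<le> a" "0 \<le> b" "0 \<le> l"
  shows "0 \<le> phi ((a + b) / 2) l - (phi a l + phi b l) / 2"
proof (cases "l = 0")
  case True then show ?thesis by (simp add: phi_def)
next
  case False
  then have l: "0 < l" using assms by simp
  have D: "0 < 2 * (a + l) * (b + l) * (a + b + 2 * l)" using assms l by simp
  have "0 \<le> (phi ((a + b) / 2) l - (phi a l + phi b l) / 2) * (2 * (a + l) * (b + l) * (a + b + 2 * l))"
    unfolding gain_id[OF assms(1,2) l] by simp
  then show ?thesis using D by (simp add: zero_le_mult_iff)
qed

lemma half_le: "(d::real) \<le> X / 2 \<Longrightarrow> 2 * d \<le> X" by linarith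

context setting
begin

lemma two_part_sum:
  fixes f g h :: "'a set \<Rightarrow> real"
  assumes D: "D \<in> A" and fg: "f D \<le> g D" and fh: "f (\<Omega> - D) \<le> h (\<Omega> - D)" and h0: "0 \<le> h (\<Omega> - D)"
  shows "(\<Sum>C\<in>{D, \<Omega> - D}. f C) \<le> g D + h (\<Omega> - D)"
proof (cases "D = \<Omega> - D")
  case True
  then have "{D, \<Omega> - D} = {D}" by simp
  then have "(\<Sum>C\<in>{D, \<Omega> - D}. f C) = f D" by simp
  then show ?thesis using fg h0 by linarith
next
  case False
  then show ?thesis using fg fh by simp
qed

lemma al_attain:
  assumes m: "posfa A m" and k: "0 \<le> k" and e: "0 < e"
  shows "\<exists>P. partn \<Omega> A P \<and> (\<Sum>C\<in>P. min (m C) (k * lam C)) \<le> ba_inf A m (\<lambda>C. k * lam C) \<Omega> + e"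
proof -
  interpret algebra \<Omega> A by (rule alg)
  obtain D where D: "D \<in> A" "D \<subseteq> \<Omega>" and Dv: "m D + k * lam (\<Omega> - D) < ba_inf A m (\<lambda>C. k * lam C) \<Omega> + e"
    using binf_attain[OF alg m klam_posfa[OF k] top e] by blast
  have OD: "\<Omega> - D \<in> A" using D by auto
  have "(\<Sum>C\<in>{D, \<Omega> - D}. min (m C) (k * lam C)) \<le> m D + k * lam (\<Omega> - D)"
    by (rule two_part_sum[OF D(1)]) (use k lam_nn[OF OD] in auto)
  then show ?thesis using partn_two[OF alg D(1)] Dv by (intro exI[of _ "{D, \<Omega> - D}"]) auto
qed

definition eta :: "nat \<Rightarrow> real" where "eta N = sv N - sl + 2 / (real N + 1)"

lemma eta_pos: "0 < eta N" unfolding eta_def using sl_props(2)[of N] by (simp add: add_nonneg_pos)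

lemma pair_bound:
  assumes k: "0 \<le> k" and nN: "N \<le> n" and pN: "N \<le> p" and Q: "partn \<Omega> A Q"
  shows "(\<Sum>E\<in>Q. \<bar>ba_inf A (mm n) (\<lambda>C. k * lam C) E - ba_inf A (mm p) (\<lambda>C. k * lam C) E\<bar>)
     \<le> sqrt (eta N) * (lam \<Omega> + 12 * (k + 1)^3) / 2 + 2 / (real N + 1)"
proof -
  interpret algebra \<Omega> A by (rule alg)
  define a where "a = mm n"
  define b where "b = mm p"
  define mid where "mid = (\<lambda>B. (a B + b B) / 2)"
  define al where "al = ba_inf A a (\<lambda>C. k * lam C)"
  define bl where "bl = ba_inf A b (\<lambda>C. k * lam C)"
  define ah where "ah = (\<lambda>E. min (a E) (k * lam E))"
  define bh where "bh = (\<lambda>E. min (b E) (k * lam E))"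
  define \<epsilon> where "\<epsilon> = 1 / (real N + 1)"
  define Ck where "Ck = 12 * (k + 1)^3"
  have e0: "0 < \<epsilon>" unfolding \<epsilon>_def by simp
  have en: "1 / (real n + 1) \<le> \<epsilon>" "1 / (real p + 1) \<le> \<epsilon>" unfolding \<epsilon>_def using nN pN
    by (auto intro!: divide_left_mono)
  have aT: "a \<in> tail_co \<mu> N" unfolding a_def using mm_props(1) nN by (rule tail_mono[rotated])
  have bT: "b \<in> tail_co \<mu> N" unfolding b_def using mm_props(1) pN by (rule tail_mono[rotated])
  have midT: "mid \<in> tail_co \<mu> N" unfolding mid_def by (rule tail_mid[OF aT bT])
  have pa: "posfa A a" and pb: "posfa A b" and pm: "posfa A mid"
    using tail_posfa aT bT midT by auto
  have pal: "posfa A al" unfolding al_def by (rule binf_fa[OF alg pa klam_posfa[OF k]])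
  have pbl: "posfa A bl" unfolding bl_def by (rule binf_fa[OF alg pb klam_posfa[OF k]])
  obtain P3 where P3: "partn \<Omega> A P3" and P3v: "(\<Sum>C\<in>P3. phi (mid C) (lam C)) < J mid + \<epsilon>"
    using J_attain[OF pm e0] by blast
  obtain P1 where P1: "partn \<Omega> A P1" and P1v: "(\<Sum>C\<in>P1. ah C) \<le> al \<Omega> + \<epsilon>"
    using al_attain[OF pa k e0] unfolding ah_def al_def by blast
  obtain P2 where P2: "partn \<Omega> A P2" and P2v: "(\<Sum>C\<in>P2. bh C) \<le> bl \<Omega> + \<epsilon>"
    using al_attain[OF pb k e0] unfolding bh_def bl_def by blast
  define R where "R = pinter Q (pinter P1 (pinter P2 P3))"
  have R23: "partn \<Omega> A (pinter P2 P3)" "prefines (pinter P2 P3) P2" "prefines (pinter P2 P3) P3"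
    using pinter_partn[OF alg P2 P3] by auto
  have R123: "partn \<Omega> A (pinter P1 (pinter P2 P3))" "prefines (pinter P1 (pinter P2 P3)) P1"
     "prefines (pinter P1 (pinter P2 P3)) (pinter P2 P3)"
    using pinter_partn[OF alg P1 R23(1)] by auto
  have RR: "partn \<Omega> A R" "prefines R Q" "prefines R (pinter P1 (pinter P2 P3))"
    unfolding R_def using pinter_partn[OF alg Q R123(1)] by auto
  have Rref: "prefines R P1" "prefines R P2" "prefines R P3"
    using prefines_trans[OF RR(3) R123(2)] prefines_trans[OF prefines_trans[OF RR(3) R123(3)] R23(2)]
      prefines_trans[OF prefines_trans[OF RR(3) R123(3)] R23(3)] by auto
  have RA: "E \<in> A" if "E \<in> R" for E using RR(1) that unfolding partn_def by auto
  have finR: "finite R" using RR(1) unfolding partn_def by auto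
  have emp: "a {} = 0" "b {} = 0" "mid {} = 0" "lam {} = 0" "al {} = 0" "bl {} = 0"
    using empty_vals pa pb pm pal pbl by auto
  have S1: "(\<Sum>E\<in>Q. \<bar>al E - bl E\<bar>) \<le> (\<Sum>E\<in>R. \<bar>al E - bl E\<bar>)"
  proof -
    have sa: "superadd A (\<lambda>E. - \<bar>al E - bl E\<bar>)" unfolding superadd_def
    proof (intro ballI impI)
      fix X Y assume X: "X \<in> A" and Y: "Y \<in> A" and XY: "X \<inter> Y = {}"
      have "al (X \<union> Y) = al X + al Y" "bl (X \<union> Y) = bl X + bl Y"
        using fa_un[OF _ X Y XY] pal pbl unfolding posfa_def by auto
      then show "- \<bar>al X - bl X\<bar> + - \<bar>al Y - bl Y\<bar> \<le> - \<bar>al (X \<union> Y) - bl (X \<union> Y)\<bar>" by simp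
    qed
    have "(\<Sum>E\<in>R. - \<bar>al E - bl E\<bar>) \<le> (\<Sum>E\<in>Q. - \<bar>al E - bl E\<bar>)"
      by (rule refine_sum[OF alg _ sa Q RR(1) RR(2)]) (simp add: emp)
    then show ?thesis by (simp add: sum_negf)
  qed
  have cellab: "al E \<le> ah E" "bl E \<le> bh E" if "E \<in> R" for E
    using binf_bounds[OF alg pa klam_posfa[OF k] RA[OF that]]
      binf_bounds[OF alg pb klam_posfa[OF k] RA[OF that]]
    unfolding al_def bl_def ah_def bh_def by auto
  have S2: "(\<Sum>E\<in>R. \<bar>al E - bl E\<bar>) \<le> (\<Sum>E\<in>R. \<bar>ah E - bh E\<bar>) + ((\<Sum>E\<in>R. ah E) - (\<Sum>E\<in>R. al E))
      + ((\<Sum>E\<in>R. bh E) - (\<Sum>E\<in>R. bl E))"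
  proof -
    have "(\<Sum>E\<in>R. \<bar>al E - bl E\<bar>) \<le> (\<Sum>E\<in>R. \<bar>ah E - bh E\<bar> + (ah E - al E) + (bh E - bl E))"
    proof (rule sum_mono)
      fix E assume "E \<in> R"
      then show "\<bar>al E - bl E\<bar> \<le> \<bar>ah E - bh E\<bar> + (ah E - al E) + (bh E - bl E)"
        using cellab[of E] by linarith
    qed
    then show ?thesis by (simp add: sum.distrib sum_subtractf)
  qed
  have S3a: "(\<Sum>E\<in>R. ah E) - (\<Sum>E\<in>R. al E) \<le> \<epsilon>"
  proof -
    have "(\<Sum>E\<in>R. ah E) \<le> (\<Sum>E\<in>P1. ah E)" unfolding ah_def
      by (rule refine_sum[OF alg _ minset_superadd[OF pa k] P1 RR(1) Rref(1)]) (simp add: emp)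
    moreover have "(\<Sum>E\<in>R. al E) = al \<Omega>" using partn_sum[OF alg _ RR(1)] pal unfolding posfa_def by auto
    ultimately show ?thesis using P1v by linarith
  qed
  have S3b: "(\<Sum>E\<in>R. bh E) - (\<Sum>E\<in>R. bl E) \<le> \<epsilon>"
  proof -
    have "(\<Sum>E\<in>R. bh E) \<le> (\<Sum>E\<in>P2. bh E)" unfolding bh_def
      by (rule refine_sum[OF alg _ minset_superadd[OF pb k] P2 RR(1) Rref(2)]) (simp add: emp)
    moreover have "(\<Sum>E\<in>R. bl E) = bl \<Omega>" using partn_sum[OF alg _ RR(1)] pbl unfolding posfa_def by auto
    ultimately show ?thesis using P2v by linarith
  qed
  define g where "g = (\<lambda>E. phi (mid E) (lam E) - (phi (a E) (lam E) + phi (b E) (lam E)) / 2)"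
  define t where "t = sqrt (eta N)"
  have t0: "0 < t" unfolding t_def using eta_pos by simp
  have cellg: "2 * \<bar>ah E - bh E\<bar> \<le> t * lam E + Ck * g E / t" if E: "E \<in> R" for E
  proof -
    have nn: "0 \<le> a E" "0 \<le> b E" "0 \<le> lam E" using pa pb lam_nn RA[OF E] unfolding posfa_def by auto
    have "(ah E - bh E)^2 \<le> Ck * lam E * g E"
      unfolding ah_def bh_def Ck_def g_def mid_def using gain_ineq[OF nn k] by (simp add: mult.commute)
    moreover have "0 \<le> Ck * g E" unfolding Ck_def g_def mid_def using gain_nn[OF nn] k by simp
    ultimately have h: "\<bar>ah E - bh E\<bar> \<le> (t * lam E + Ck * g E / t) / 2" using amgm t0 nn(3) by blast
    show ?thesis using h by (rule half_le)
  qed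
  have S4: "2 * (\<Sum>E\<in>R. \<bar>ah E - bh E\<bar>) \<le> t * lam \<Omega> + Ck * (\<Sum>E\<in>R. g E) / t"
  proof -
    have "2 * (\<Sum>E\<in>R. \<bar>ah E - bh E\<bar>) = (\<Sum>E\<in>R. 2 * \<bar>ah E - bh E\<bar>)" by (simp add: sum_distrib_left)
    also have "\<dots> \<le> (\<Sum>E\<in>R. t * lam E + Ck * g E / t)"
      by (rule sum_mono) (rule cellg)
    also have "\<dots> = t * (\<Sum>E\<in>R. lam E) + Ck * (\<Sum>E\<in>R. g E) / t"
      by (simp add: sum.distrib sum_divide_distrib[symmetric] sum_distrib_left[symmetric])
    also have "(\<Sum>E\<in>R. lam E) = lam \<Omega>" using partn_sum[OF alg _ RR(1)] lam_posfa unfolding posfa_def by auto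
    finally show ?thesis .
  qed
  have S5: "(\<Sum>E\<in>R. g E) \<le> eta N"
  proof -
    have gs: "(\<Sum>E\<in>R. g E) = (\<Sum>E\<in>R. phi (mid E) (lam E)) - (\<Sum>E\<in>R. phi (a E) (lam E)) / 2 - (\<Sum>E\<in>R. phi (b E) (lam E)) / 2"
      unfolding g_def by (simp add: sum_subtractf sum.distrib sum_divide_distrib[symmetric] add_divide_distrib)
    have "(\<Sum>E\<in>R. phi (mid E) (lam E)) \<le> (\<Sum>E\<in>P3. phi (mid E) (lam E))"
      by (rule refine_sum[OF alg _ phiset_superadd[OF pm] P3 RR(1) Rref(3)]) (simp add: emp phi_zero)
    moreover have "J mid \<le> sv N" using sv_props(3)[OF midT] .
    ultimately have m1: "(\<Sum>E\<in>R. phi (mid E) (lam E)) < sv N + \<epsilon>" using P3v by linarith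
    have "J a \<le> (\<Sum>E\<in>R. phi (a E) (lam E))" by (rule J_lower[OF pa RR(1)])
    moreover have "sl - \<epsilon> < J a" using mm_J[of n] en(1) unfolding a_def by linarith
    ultimately have m2: "sl - \<epsilon> < (\<Sum>E\<in>R. phi (a E) (lam E))" by linarith
    have "J b \<le> (\<Sum>E\<in>R. phi (b E) (lam E))" by (rule J_lower[OF pb RR(1)])
    moreover have "sl - \<epsilon> < J b" using mm_J[of p] en(2) unfolding b_def by linarith
    ultimately have m3: "sl - \<epsilon> < (\<Sum>E\<in>R. phi (b E) (lam E))" by linarith
    have "eta N = sv N - sl + 2 * \<epsilon>" unfolding eta_def \<epsilon>_def by simp
    then show ?thesis using m1 m2 m3 gs by linarith
  qed
  have S6: "Ck * (\<Sum>E\<in>R. g E) / t \<le> Ck * t"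
  proof -
    have Ck0: "0 \<le> Ck" unfolding Ck_def using k by simp
    have "Ck * (\<Sum>E\<in>R. g E) / t \<le> Ck * eta N / t"
      using S5 Ck0 t0 by (intro divide_right_mono mult_left_mono) auto
    also have "Ck * eta N / t = Ck * t"
    proof -
      have "eta N / t = t" unfolding t_def using eta_pos[of N] by (intro real_div_sqrt) simp
      then show ?thesis by (metis times_divide_eq_right)
    qed
    finally show ?thesis .
  qed
  define X where "X = Ck * (\<Sum>E\<in>R. g E) / t"
  define Y where "Y = t * lam \<Omega>"
  define Z where "Z = Ck * t"
  have S4': "2 * (\<Sum>E\<in>R. \<bar>ah E - bh E\<bar>) \<le> Y + X" using S4 unfolding X_def Y_def .
  have S6': "X \<le> Z" using S6 unfolding X_def Z_def .
  have fin0: "2 * (\<Sum>E\<in>Q. \<bar>al E - bl E\<bar>) \<le> Y + Z + 4 * \<epsilon>"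
    using S1 S2 S3a S3b S4' S6' by linarith
  then have fin: "2 * (\<Sum>E\<in>Q. \<bar>al E - bl E\<bar>) \<le> t * lam \<Omega> + Ck * t + 4 * \<epsilon>"
    unfolding Y_def Z_def .
  have "(\<Sum>E\<in>Q. \<bar>al E - bl E\<bar>) \<le> (t * lam \<Omega> + Ck * t + 4 * \<epsilon>) / 2"
    using fin by simp
  also have "\<dots> = sqrt (eta N) * (lam \<Omega> + 12 * (k + 1)^3) / 2 + 2 / (real N + 1)"
    unfolding t_def Ck_def \<epsilon>_def by (simp add: algebra_simps add_divide_distrib) (simp add: field_simps)
  finally show ?thesis unfolding al_def bl_def a_def b_def .
qed

end


context setting
begin

definition eb :: "real \<Rightarrow> nat \<Rightarrow> real" where
  "eb k N = sqrt (eta N) * (lam \<Omega> + 12 * (k + 1)^3) / 2 + 2 / (real N + 1)"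

lemma two_lim: "(\<lambda>N. 2 / (real N + 1)) \<longlonglongrightarrow> 0"
proof -
  have "(\<lambda>N. 2 * inverse (real (Suc N))) \<longlonglongrightarrow> 2 * 0"
    by (intro tendsto_intros LIMSEQ_inverse_real_of_nat)
  then show ?thesis by (simp add: divide_inverse add.commute)
qed

lemma eta_lim: "eta \<longlonglongrightarrow> 0"
proof -
  have "(\<lambda>N. sv N - sl + 2 / (real N + 1)) \<longlonglongrightarrow> sl - sl + 0"
    by (intro tendsto_intros sl_props(1) two_lim)
  then show ?thesis unfolding eta_def[abs_def] by simp
qed

lemma eb_lim: "eb k \<longlonglongrightarrow> 0"
proof -
  have "(\<lambda>N. sqrt (eta N) * (lam \<Omega> + 12 * (k + 1)^3) / 2 + 2 / (real N + 1)) \<longlonglongrightarrow> sqrt 0 * (lam \<Omega> + 12 * (k + 1)^3) / 2 + 0"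
    by (intro tendsto_intros eta_lim two_lim) simp
  then show ?thesis unfolding eb_def[abs_def] by simp
qed

lemma eb_small: assumes "0 < e" shows "\<exists>N. \<forall>M\<ge>N. eb k M < e"
proof -
  obtain N where N: "\<forall>n\<ge>N. dist (eb k n) 0 < e" using eb_lim[of k] assms unfolding lim_sequentially by blast
  show ?thesis
  proof (intro exI allI impI)
    fix M assume "N \<le> M"
    then have "dist (eb k M) 0 < e" using N by simp
    then show "eb k M < e" by (simp add: dist_real_def)
  qed
qed

lemma single_le_partsum:
  fixes f :: "'a set \<Rightarrow> real"
  assumes B: "B \<in> A"
  shows "\<bar>f B\<bar> \<le> (\<Sum>C\<in>{B, \<Omega> - B}. \<bar>f C\<bar>)"
  by (rule member_le_sum) auto

definition al :: "real \<Rightarrow> nat \<Rightarrow> 'a set \<Rightarrow> real" where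
  "al k n = ba_inf A (mm n) (\<lambda>C. k * lam C)"

lemma al_posfa: "0 \<le> k \<Longrightarrow> posfa A (al k n)"
  unfolding al_def by (rule binf_fa[OF alg tail_posfa[OF mm_props(1)] klam_posfa])

lemma al_bound:
  assumes k: "0 \<le> k" and "N \<le> n" "N \<le> p" and Q: "partn \<Omega> A Q"
  shows "(\<Sum>E\<in>Q. \<bar>al k n E - al k p E\<bar>) \<le> eb k N"
  unfolding al_def eb_def by (rule pair_bound[OF assms])

lemma al_pt:
  assumes k: "0 \<le> k" and "N \<le> n" "N \<le> p" and B: "B \<in> A"
  shows "\<bar>al k n B - al k p B\<bar> \<le> eb k N"
  using single_le_partsum[OF B, of "\<lambda>E. al k n E - al k p E"] al_bound[OF assms(1-3) partn_two[OF alg B]]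
  by linarith

definition xi :: "real \<Rightarrow> 'a set \<Rightarrow> real" where
  "xi k B = lim (\<lambda>n. al k n B)"

lemma xi_lim: assumes k: "0 \<le> k" and B: "B \<in> A" shows "(\<lambda>n. al k n B) \<longlonglongrightarrow> xi k B"
proof -
  have "Cauchy (\<lambda>n. al k n B)"
  proof (rule metric_CauchyI)
    fix e :: real assume "0 < e"
    then obtain N where N: "\<forall>M\<ge>N. eb k M < e" using eb_small by blast
    show "\<exists>M. \<forall>m\<ge>M. \<forall>n\<ge>M. dist (al k m B) (al k n B) < e"
    proof (intro exI allI impI)
      fix m n assume "N \<le> m" "N \<le> n"
      then have "\<bar>al k m B - al k n B\<bar> \<le> eb k N" by (intro al_pt[OF k _ _ B])
      moreover have "eb k N < e" using N by simp
      ultimately show "dist (al k m B) (al k n B) < e" by (simp add: dist_real_def)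
    qed
  qed
  then show ?thesis unfolding xi_def by (simp add: Cauchy_convergent_iff convergent_LIMSEQ_iff)
qed

lemma xi_norm:
  assumes k: "0 \<le> k" and n: "N \<le> n" and Q: "partn \<Omega> A Q"
  shows "(\<Sum>E\<in>Q. \<bar>al k n E - xi k E\<bar>) \<le> eb k N"
proof -
  have QA: "E \<in> A" if "E \<in> Q" for E using Q that unfolding partn_def by auto
  have "(\<lambda>p. \<Sum>E\<in>Q. \<bar>al k n E - al k p E\<bar>) \<longlonglongrightarrow> (\<Sum>E\<in>Q. \<bar>al k n E - xi k E\<bar>)"
    by (intro tendsto_sum tendsto_rabs tendsto_diff tendsto_const xi_lim[OF k QA])
  moreover have "\<exists>M. \<forall>p\<ge>M. (\<Sum>E\<in>Q. \<bar>al k n E - al k p E\<bar>) \<le> eb k N"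
    using al_bound[OF k n _ Q] by blast
  ultimately show ?thesis by (rule LIMSEQ_le_const2)
qed

lemma xi_pt:
  assumes k: "0 \<le> k" and n: "N \<le> n" and B: "B \<in> A"
  shows "\<bar>al k n B - xi k B\<bar> \<le> eb k N"
  using single_le_partsum[OF B, of "\<lambda>E. al k n E - xi k E"] xi_norm[OF k n partn_two[OF alg B]]
  by linarith

lemma xi_posfa: assumes k: "0 \<le> k" shows "posfa A (xi k)"
  unfolding posfa_def fin_additive_def
proof (intro conjI ballI impI)
  fix B assume B: "B \<in> A"
  show "0 \<le> xi k B"
    by (rule LIMSEQ_le_const[OF xi_lim[OF k B]]) (use al_posfa[OF k] B in \<open>auto simp: posfa_def\<close>)
next
  fix B C assume B: "B \<in> A" and C: "C \<in> A" and BC: "B \<inter> C = {}"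
  interpret algebra \<Omega> A by (rule alg)
  have BC': "B \<union> C \<in> A" using B C by auto
  have "(\<lambda>n. al k n (B \<union> C)) = (\<lambda>n. al k n B + al k n C)"
    using fa_un[OF _ B C BC] al_posfa[OF k] unfolding posfa_def by auto
  then have "(\<lambda>n. al k n (B \<union> C)) \<longlonglongrightarrow> xi k B + xi k C"
    using tendsto_add[OF xi_lim[OF k B] xi_lim[OF k C]] by simp
  then show "xi k (B \<union> C) = xi k B + xi k C" using xi_lim[OF k BC'] LIMSEQ_unique by blast
qed

lemma al_le: assumes k: "0 \<le> k" and B: "B \<in> A"
  shows "al k n B \<le> mm n B" "al k n B \<le> k * lam B"
  using binf_bounds[OF alg tail_posfa[OF mm_props(1)] klam_posfa[OF k] B] unfolding al_def by auto

lemma al_mono: assumes k: "0 \<le> k" "k \<le> k'" and B: "B \<in> A"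
  shows "al k n B \<le> al k' n B"
proof -
  have k': "0 \<le> k'" using k by simp
  interpret algebra \<Omega> A by (rule alg)
  show ?thesis unfolding al_def
  proof (rule binf_greatest[OF alg tail_posfa[OF mm_props(1)] klam_posfa[OF k'] B])
    fix D assume D: "D \<in> A" "D \<subseteq> B"
    have "ba_inf A (mm n) (\<lambda>C. k * lam C) B \<le> mm n D + k * lam (B - D)"
      by (rule binf_lower[OF alg tail_posfa[OF mm_props(1)] klam_posfa[OF k(1)] B D])
    also have "k * lam (B - D) \<le> k' * lam (B - D)"
      using k lam_nn[of "B - D"] B D by (intro mult_right_mono) auto
    finally show "ba_inf A (mm n) (\<lambda>C. k * lam C) B \<le> mm n D + k' * lam (B - D)" by simp
  qed
qed

lemma xi_le: assumes k: "0 \<le> k" and B: "B \<in> A"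
  shows "xi k B \<le> K" "xi k B \<le> k * lam B"
proof -
  show "xi k B \<le> K"
    by (rule LIMSEQ_le_const2[OF xi_lim[OF k B]]) (use al_le[OF k B] tail_le[OF mm_props(1) B] order_trans in blast)
  show "xi k B \<le> k * lam B"
    by (rule LIMSEQ_le_const2[OF xi_lim[OF k B]]) (use al_le[OF k B] in blast)
qed

lemma xi_mono: assumes k: "0 \<le> k" "k \<le> k'" and B: "B \<in> A"
  shows "xi k B \<le> xi k' B"
  using k by (intro LIMSEQ_le[OF xi_lim[OF k(1) B] xi_lim[OF _ B]]) (auto intro: al_mono[OF k B])

end


context setting
begin

definition xs :: "'a set \<Rightarrow> real" where "xs B = (SUP j::nat. xi (real j) B)"

lemma xi_inc: "B \<in> A \<Longrightarrow> incseq (\<lambda>j::nat. xi (real j) B)"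
  by (rule incseq_SucI) (rule xi_mono, auto)

lemma xs_lim: assumes B: "B \<in> A" shows "(\<lambda>j::nat. xi (real j) B) \<longlonglongrightarrow> xs B"
  unfolding xs_def
  by (rule LIMSEQ_incseq_SUP[OF _ xi_inc[OF B]]) (use xi_le(1)[OF _ B] in \<open>auto intro!: bdd_aboveI[of _ K]\<close>)

lemma xi_le_xs: "B \<in> A \<Longrightarrow> xi (real j) B \<le> xs B"
  by (rule incseq_le[OF xi_inc xs_lim])

lemma xs_posfa: "posfa A xs"
  unfolding posfa_def fin_additive_def
proof (intro conjI ballI impI)
  fix B assume B: "B \<in> A"
  have "0 \<le> xi (real 0) B" using xi_posfa[of 0] B unfolding posfa_def by auto
  then show "0 \<le> xs B" using xi_le_xs[OF B, of 0] by linarith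
next
  fix B C assume B: "B \<in> A" and C: "C \<in> A" and BC: "B \<inter> C = {}"
  interpret algebra \<Omega> A by (rule alg)
  have BC': "B \<union> C \<in> A" using B C by auto
  have "(\<lambda>j::nat. xi (real j) (B \<union> C)) = (\<lambda>j. xi (real j) B + xi (real j) C)"
    using fa_un[OF _ B C BC] xi_posfa unfolding posfa_def by auto
  then have "(\<lambda>j::nat. xi (real j) (B \<union> C)) \<longlonglongrightarrow> xs B + xs C"
    using tendsto_add[OF xs_lim[OF B] xs_lim[OF C]] by simp
  then show "xs (B \<union> C) = xs B + xs C" using xs_lim[OF BC'] LIMSEQ_unique by blast
qed

lemma gap: assumes B: "B \<in> A" shows "xs B - xi (real j) B \<le> xs \<Omega> - xi (real j) \<Omega>"
proof -
  interpret algebra \<Omega> A by (rule alg)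
  have "posfa A (\<lambda>B. xs B - xi (real j) B)"
    unfolding posfa_def fin_additive_def
  proof (intro conjI ballI impI)
    fix B assume "B \<in> A" then show "0 \<le> xs B - xi (real j) B" using xi_le_xs by simp
  next
    fix B C assume B: "B \<in> A" and C: "C \<in> A" and BC: "B \<inter> C = {}"
    show "xs (B \<union> C) - xi (real j) (B \<union> C) = xs B - xi (real j) B + (xs C - xi (real j) C)"
    proof -
      have f1: "fin_additive A xs" using xs_posfa unfolding posfa_def by simp
      have f2: "fin_additive A (xi (real j))" using xi_posfa[of "real j"] unfolding posfa_def by simp
      show ?thesis using fa_un[OF f1 B C BC] fa_un[OF f2 B C BC] by simp
    qed
  qed
  moreover have "B \<subseteq> \<Omega>" using B sets_into_space by blast
  ultimately show ?thesis using posfa_mono[OF alg _ B top] by blast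
qed

lemma gap_small: assumes "0 < e" shows "\<exists>j0. \<forall>j\<ge>j0. xs \<Omega> - xi (real j) \<Omega> < e"
proof -
  have "(\<lambda>j::nat. xs \<Omega> - xi (real j) \<Omega>) \<longlonglongrightarrow> xs \<Omega> - xs \<Omega>"
    by (intro tendsto_intros xs_lim top)
  then obtain j0 where j0: "\<forall>j\<ge>j0. dist (xs \<Omega> - xi (real j) \<Omega>) 0 < e"
    using assms unfolding lim_sequentially by auto
  show ?thesis
  proof (intro exI allI impI)
    fix j assume "j0 \<le> j"
    then have "dist (xs \<Omega> - xi (real j) \<Omega>) 0 < e" using j0 by simp
    then show "xs \<Omega> - xi (real j) \<Omega> < e" by (simp add: dist_real_def)
  qed
qed

lemma binf_xs:
  assumes B: "B \<in> A"
  shows "ba_inf A xs (\<lambda>C. real kk * lam C) B = xi (real kk) B"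
proof (rule antisym)
  interpret algebra \<Omega> A by (rule alg)
  let ?k = "real kk"
  have k: "0 \<le> ?k" by simp
  show "xi ?k B \<le> ba_inf A xs (\<lambda>C. ?k * lam C) B"
  proof (rule binf_greatest[OF alg xs_posfa klam_posfa[OF k] B])
    fix D assume D: "D \<in> A" "D \<subseteq> B"
    have BD: "B - D \<in> A" using B D by auto
    have "xi ?k B = xi ?k D + xi ?k (B - D)"
      using fa_un[OF _ D(1) BD] xi_posfa[OF k] D(2) unfolding posfa_def
      by (metis Diff_disjoint Diff_partition)
    also have "\<dots> \<le> xs D + ?k * lam (B - D)" using xi_le_xs[OF D(1), of kk] xi_le(2)[OF k BD] by linarith
    finally show "xi ?k B \<le> xs D + ?k * lam (B - D)" .
  qed
  show "ba_inf A xs (\<lambda>C. ?k * lam C) B \<le> xi ?k B"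
  proof (rule field_le_epsilon)
    fix e :: real assume e: "0 < e"
    have e3: "0 < e / 4" using e by simp
    obtain j0 where j0: "\<forall>j\<ge>j0. xs \<Omega> - xi (real j) \<Omega> < e / 4" using gap_small[OF e3] by blast
    define j where "j = max j0 kk"
    have jj: "j0 \<le> j" "kk \<le> j" unfolding j_def by auto
    have kj: "0 \<le> real j" by simp
    obtain N1 where N1: "\<forall>M\<ge>N1. eb ?k M < e / 4" using eb_small[OF e3] by blast
    obtain N2 where N2: "\<forall>M\<ge>N2. eb (real j) M < e / 4" using eb_small[OF e3] by blast
    define n where "n = max N1 N2"
    have n: "N1 \<le> n" "N2 \<le> n" unfolding n_def by auto
    have pm: "posfa A (mm n)" by (rule tail_posfa[OF mm_props(1)])
    obtain D where D: "D \<in> A" "D \<subseteq> B" and Dv: "mm n D + ?k * lam (B - D) < al ?k n B + e / 4"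
      using binf_attain[OF alg pm klam_posfa[OF k] B e3] unfolding al_def by blast
    have "xs D \<le> xi (real j) D + (xs \<Omega> - xi (real j) \<Omega>)" using gap[OF D(1), of j] by linarith
    also have "xs \<Omega> - xi (real j) \<Omega> < e / 4" using j0 jj by simp
    finally have 1: "xs D < xi (real j) D + e / 4" by simp
    have "\<bar>al (real j) n D - xi (real j) D\<bar> \<le> eb (real j) N2" by (rule xi_pt[OF kj n(2) D(1)])
    moreover have "eb (real j) N2 < e / 4" using N2 by simp
    moreover have "al (real j) n D \<le> mm n D" by (rule al_le(1)[OF kj D(1)])
    ultimately have 2: "xi (real j) D < mm n D + e / 4" by linarith
    have "\<bar>al ?k n B - xi ?k B\<bar> \<le> eb ?k N1" by (rule xi_pt[OF k n(1) B])
    moreover have "eb ?k N1 < e / 4" using N1 by simp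
    ultimately have 3: "al ?k n B < xi ?k B + e / 4" by linarith
    have "ba_inf A xs (\<lambda>C. ?k * lam C) B \<le> xs D + ?k * lam (B - D)"
      by (rule binf_lower[OF alg xs_posfa klam_posfa[OF k] B D])
    then show "ba_inf A xs (\<lambda>C. ?k * lam C) B \<le> xi ?k B + e" using 1 2 3 Dv by linarith
  qed
qed

end


context setting
begin

lemma main_loc:
  "\<exists>\<xi> m. \<xi> \<in> ba_ac_pos \<Omega> A lam \<and> (\<forall>n. m n \<in> tail_co \<mu> n) \<and>
     (\<forall>k::nat. (\<lambda>n. ba_norm \<Omega> A (\<lambda>B. ba_inf A \<xi> (\<lambda>C. real k * lam C) B
                                    - ba_inf A (m n) (\<lambda>C. real k * lam C) B)) \<longlonglongrightarrow> 0) \<and>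
     (\<forall>B\<in>A. ereal (\<xi> B) \<le> liminf (\<lambda>n. ereal (m n B)))"
proof (intro exI conjI allI ballI)
  show "\<And>n. mm n \<in> tail_co \<mu> n" by (rule mm_props(1))
  have ac: "abs_cont A xs lam" unfolding abs_cont_def
  proof (intro allI impI)
    fix \<epsilon> :: real assume \<epsilon>: "0 < \<epsilon>"
    have e2: "0 < \<epsilon> / 2" using \<epsilon> by simp
    obtain j0 where j0: "\<forall>j\<ge>j0. xs \<Omega> - xi (real j) \<Omega> < \<epsilon> / 2" using gap_small[OF e2] by blast
    define \<delta> where "\<delta> = \<epsilon> / (2 * (real j0 + 1))"
    have d0: "0 < \<delta>" unfolding \<delta>_def using \<epsilon> by simp
    have jd: "real j0 * \<delta> \<le> \<epsilon> / 2"
    proof -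
      have "real j0 * \<delta> \<le> (real j0 + 1) * \<delta>" using d0 by simp
      also have "\<dots> = \<epsilon> / 2"
      proof -
        have "(real j0 + 1) \<noteq> 0" by simp
        then show ?thesis unfolding \<delta>_def by (simp add: field_simps)
      qed
      finally show ?thesis .
    qed
    show "\<exists>\<delta>>0. \<forall>B\<in>A. tvar A lam B < \<delta> \<longrightarrow> tvar A xs B < \<epsilon>"
    proof (intro exI conjI ballI impI)
      show "0 < \<delta>" by (rule d0)
      fix B assume B: "B \<in> A" and lB: "tvar A lam B < \<delta>"
      have lB': "lam B < \<delta>" using lB tvar_pos[OF alg lam_posfa B] by simp
      have "xs B \<le> xi (real j0) B + (xs \<Omega> - xi (real j0) \<Omega>)" using gap[OF B, of j0] by linarith
      moreover have "xi (real j0) B \<le> real j0 * lam B" by (rule xi_le(2)[OF _ B]) simp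
      moreover have "real j0 * lam B \<le> real j0 * \<delta>" using lB' by (intro mult_left_mono) auto
      moreover have "xs \<Omega> - xi (real j0) \<Omega> < \<epsilon> / 2" using j0 by simp
      ultimately have "xs B < \<epsilon>" using jd by linarith
      then show "tvar A xs B < \<epsilon>" using tvar_pos[OF alg xs_posfa B] by simp
    qed
  qed
  show "xs \<in> ba_ac_pos \<Omega> A lam" unfolding ba_ac_pos_def using posfa_ba[OF alg xs_posfa] ac by simp
  fix kk :: nat
  let ?k = "real kk"
  have k: "0 \<le> ?k" by simp
  show "(\<lambda>n. ba_norm \<Omega> A (\<lambda>B. ba_inf A xs (\<lambda>C. ?k * lam C) B - ba_inf A (mm n) (\<lambda>C. ?k * lam C) B)) \<longlonglongrightarrow> 0"
  proof (rule LIMSEQ_I)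
    fix r :: real assume r: "0 < r"
    obtain N where N: "\<forall>M\<ge>N. eb ?k M < r" using eb_small[OF r] by blast
    show "\<exists>no. \<forall>n\<ge>no. norm (ba_norm \<Omega> A (\<lambda>B. ba_inf A xs (\<lambda>C. ?k * lam C) B - ba_inf A (mm n) (\<lambda>C. ?k * lam C) B) - 0) < r"
    proof (intro exI allI impI)
      fix n assume n: "N \<le> n"
      have H: "(\<Sum>C\<in>P. \<bar>ba_inf A xs (\<lambda>C. ?k * lam C) C - ba_inf A (mm n) (\<lambda>C. ?k * lam C) C\<bar>) \<le> eb ?k N"
        if P: "partn \<Omega> A P" for P
      proof -
        have "(\<Sum>C\<in>P. \<bar>ba_inf A xs (\<lambda>C. ?k * lam C) C - ba_inf A (mm n) (\<lambda>C. ?k * lam C) C\<bar>)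
            = (\<Sum>C\<in>P. \<bar>al ?k n C - xi ?k C\<bar>)"
        proof (rule sum.cong[OF refl])
          fix C assume "C \<in> P"
          then have C: "C \<in> A" using P unfolding partn_def by auto
          show "\<bar>ba_inf A xs (\<lambda>C. ?k * lam C) C - ba_inf A (mm n) (\<lambda>C. ?k * lam C) C\<bar> = \<bar>al ?k n C - xi ?k C\<bar>"
            unfolding binf_xs[OF C] al_def by simp
        qed
        also have "\<dots> \<le> eb ?k N" by (rule xi_norm[OF k n P])
        finally show ?thesis .
      qed
      have b: "0 \<le> ba_norm \<Omega> A (\<lambda>B. ba_inf A xs (\<lambda>C. ?k * lam C) B - ba_inf A (mm n) (\<lambda>C. ?k * lam C) B)"
        "ba_norm \<Omega> A (\<lambda>B. ba_inf A xs (\<lambda>C. ?k * lam C) B - ba_inf A (mm n) (\<lambda>C. ?k * lam C) B) \<le> eb ?k N"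
        using norm_le[OF alg H] by auto
      have "eb ?k N < r" using N by simp
      then show "norm (ba_norm \<Omega> A (\<lambda>B. ba_inf A xs (\<lambda>C. ?k * lam C) B - ba_inf A (mm n) (\<lambda>C. ?k * lam C) B) - 0) < r"
        using b by simp
    qed
  qed
next
  fix B assume B: "B \<in> A"
  have "ereal (xi (real j) B) \<le> liminf (\<lambda>n. ereal (mm n B))" for j :: nat
  proof -
    have kj: "0 \<le> real j" by simp
    have "(\<lambda>n. ereal (al (real j) n B)) \<longlonglongrightarrow> ereal (xi (real j) B)"
      using xi_lim[OF kj B] by (simp add: lim_ereal)
    then have "liminf (\<lambda>n. ereal (al (real j) n B)) = ereal (xi (real j) B)"
      by (intro lim_imp_Liminf) simp_all
    moreover have "liminf (\<lambda>n. ereal (al (real j) n B)) \<le> liminf (\<lambda>n. ereal (mm n B))"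
      by (intro Liminf_mono) (use al_le(1)[OF kj B] in simp)
    ultimately show ?thesis by simp
  qed
  moreover have "(\<lambda>j. ereal (xi (real j) B)) \<longlonglongrightarrow> ereal (xs B)"
    using xs_lim[OF B] by (simp add: lim_ereal)
  ultimately show "ereal (xs B) \<le> liminf (\<lambda>n. ereal (mm n B))"
    by (intro LIMSEQ_le_const2[of "\<lambda>j. ereal (xi (real j) B)"]) auto
qed

end


theorem mainTheorem13:
  fixes \<Omega> :: "'a set" and A :: "'a set set" and \<mu> :: "nat \<Rightarrow> 'a set \<Rightarrow> real"
  assumes "algebra \<Omega> A"
    and "\<And>n. \<mu> n \<in> ba_pos \<Omega> A"
    and "\<exists>K. \<forall>n. ba_norm \<Omega> A (\<mu> n) \<le> K"
  defines "lam \<equiv> (\<lambda>B. \<Sum>n. \<mu> n B / 2 ^ n)"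
  shows "\<exists>\<xi> m. \<xi> \<in> ba_ac_pos \<Omega> A lam \<and> (\<forall>n. m n \<in> tail_co \<mu> n) \<and>
     (\<forall>k::nat. (\<lambda>n. ba_norm \<Omega> A (\<lambda>B. ba_inf A \<xi> (\<lambda>C. real k * lam C) B
                                    - ba_inf A (m n) (\<lambda>C. real k * lam C) B)) \<longlonglongrightarrow> 0) \<and>
     (\<forall>B\<in>A. ereal (\<xi> B) \<le> liminf (\<lambda>n. ereal (m n B)))"
proof -
  obtain K where K: "\<forall>n. ba_norm \<Omega> A (\<mu> n) \<le> K" using assms(3) by blast
  have pos: "posfa A (\<mu> n)" for n using assms(2) ba_pos_posfa by blast
  have top: "\<Omega> \<in> A" using assms(1) algebra.top by blast
  have bnd: "\<mu> n \<Omega> \<le> K" for n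
  proof -
    have "ba_norm \<Omega> A (\<mu> n) = \<mu> n \<Omega>" unfolding ba_norm_def by (rule tvar_pos[OF assms(1) pos top])
    then show ?thesis using K by metis
  qed
  interpret S: setting \<Omega> A \<mu> K
    unfolding setting_def using assms(1) pos bnd by blast
  have L: "lam = S.lam" unfolding assms(4) by (rule ext) (simp add: S.lam_def)
  show ?thesis unfolding L by (rule S.main_loc)
qed


end
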